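(* Let $\boldsymbol{M}$ be a weight sequence satisfying $\operatorname{(sm)}$, and let $\boldsymbol{A}$ be either an almost increasing sequence, or a sequence such that $\liminf_{p\to\infty}A_p^{1/p}>0$ and $\widehat{\boldsymbol{A}}$ satisfies $\operatorname{(alg)}$. Then: (i) There exists $a>0$ such that for every $h\ge1$ one has $\mathcal{F}(\mathcal{S}^{\widehat{\boldsymbol{A}},h}_{\boldsymbol{M},h}(\mathbb{R}))\subset\mathcal{S}^{\boldsymbol{M}_{+1},ah}_{\widehat{\boldsymbol{A}},ah}(\mathbb{R})$, and $\mathcal{F}\colon\mathcal{S}^{\widehat{\boldsymbol{A}},h}_{\boldsymbol{M},h}(\mathbb{R})\to\mathcal{S}^{\boldsymbol{M}_{+1},ah}_{\widehat{\boldsymbol{A}},ah}(\mathbb{R})$ is continuous. (ii) $\mathcal{F}(\mathcal{S}^{\{\widehat{\boldsymbol{A}}\}}_{\{\boldsymbol{M}\}}(\mathbb{R}))\subset\mathcal{S}^{\{\boldsymbol{M}_{+1}\}}_{\{\widehat{\boldsymbol{A}}\}}(\mathbb{R})$ and $\mathcal{F}\colon\mathcal{S}^{\{\widehat{\boldsymbol{A}}\}}_{\{\boldsymbol{M}\}}(\mathbb{R})\to\mathcal{S}^{\{\boldsymbol{M}_{+1}\}}_{\{\widehat{\boldsymbol{A}}\}}(\mathbb{R})$ is continuous. (iii) Statements (i) and (ii) remain valid when $\mathcal{F}$ is replaced by $\mathcal{F}^{-1}$.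
   Context: Sequences are of positive reals indexed by $\mathbb{N}_0$; $m_p=M_{p+1}/M_p$. Weight sequence: $M_0=1$, $M_p^2\le M_{p-1}M_{p+1}$ ($p\ge1$), $m_p\to\infty$. $\operatorname{(sm)}$: $\log(m_{p+1}/m_p)\le C_0H^{p+1}$ for all $p$, some $C_0>0$, $H>1$. $\operatorname{(alg)}$ for $\boldsymbol{N}$: $N_pN_q\le C_1^{p+q}N_{p+q}$ for all $p,q$, some $C_1\ge1$. Almost increasing: $A_p\le aA_q$ for all $q\ge p$, some $a>0$. $\widehat{\boldsymbol{A}}=(p!A_p)_p$, $\boldsymbol{M}_{+1}=(M_{p+1})_p$. For sequences $\boldsymbol{N},\boldsymbol{B}$ and $h>0$, $\mathcal{S}^{\boldsymbol{B},h}_{\boldsymbol{N},h}(\mathbb{R})$ is the Banach space of $\varphi\in C^\infty(\mathbb{R})$ with norm $\sup_{p,q\in\mathbb{N}_0}\sup_{x\in\mathbb{R}}|x^p\varphi^{(q)}(x)|/(h^{p+q}N_pB_q)<\infty$, and $\mathcal{S}^{\{\boldsymbol{B}\}}_{\{\boldsymbol{N}\}}(\mathbb{R})=\bigcup_{h>0}\mathcal{S}^{\boldsymbol{B},h}_{\boldsymbol{N},h}(\mathbb{R})$ with the inductive limit topology. $\mathcal{F}(\varphi)(\xi)=\int_{-\infty}^\infty\varphi(x)e^{ix\xi}\,dx$, and $\mathcal{F}^{-1}(\varphi)(\xi)=\frac1{2\pi}\mathcal{F}(\varphi)(-\xi)$. *)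

theory Defs
  imports "HOL-Analysis.Analysis"
begin

definition quot_seq :: "(nat \<Rightarrow> real) \<Rightarrow> nat \<Rightarrow> real" where
  "quot_seq M p = M (Suc p) / M p"

definition weight_sequence :: "(nat \<Rightarrow> real) \<Rightarrow> bool" where
  "weight_sequence M \<longleftrightarrow> (\<forall>p. M p > 0) \<and> M 0 = 1 \<and>
     (\<forall>p\<ge>1. (M p)^2 \<le> M (p - 1) * M (p + 1)) \<and>
     filterlim (quot_seq M) at_top sequentially"

definition cond_sm :: "(nat \<Rightarrow> real) \<Rightarrow> bool" where
  "cond_sm M \<longleftrightarrow> (\<exists>C0 H. C0 > 0 \<and> H > 1 \<and>
     (\<forall>p. ln (quot_seq M (p + 1) / quot_seq M p) \<le> C0 * H ^ (p + 1)))"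

definition cond_alg :: "(nat \<Rightarrow> real) \<Rightarrow> bool" where
  "cond_alg N \<longleftrightarrow> (\<exists>C1\<ge>1. \<forall>p q. N p * N q \<le> C1 ^ (p + q) * N (p + q))"

definition almost_increasing :: "(nat \<Rightarrow> real) \<Rightarrow> bool" where
  "almost_increasing A \<longleftrightarrow> (\<exists>a>0. \<forall>p q. p \<le> q \<longrightarrow> A p \<le> a * A q)"

definition hat_seq :: "(nat \<Rightarrow> real) \<Rightarrow> nat \<Rightarrow> real" where
  "hat_seq A p = fact p * A p"

definition shift1 :: "(nat \<Rightarrow> real) \<Rightarrow> nat \<Rightarrow> real" where
  "shift1 M p = M (p + 1)"

fun vder :: "(real \<Rightarrow> complex) \<Rightarrow> nat \<Rightarrow> real \<Rightarrow> complex" where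
  "vder f 0 = f"
| "vder f (Suc k) = (\<lambda>x. vector_derivative (vder f k) (at x))"

definition smooth_fun :: "(real \<Rightarrow> complex) \<Rightarrow> bool" where
  "smooth_fun f \<longleftrightarrow> (\<forall>k x. vder f k differentiable (at x))"

definition S_vals :: "(nat \<Rightarrow> real) \<Rightarrow> (nat \<Rightarrow> real) \<Rightarrow> real \<Rightarrow> (real \<Rightarrow> complex) \<Rightarrow> real set" where
  "S_vals N B h f = {norm (complex_of_real (x ^ p) * vder f q x) / (h ^ (p + q) * N p * B q)
                     | p q x. True}"

definition S_norm :: "(nat \<Rightarrow> real) \<Rightarrow> (nat \<Rightarrow> real) \<Rightarrow> real \<Rightarrow> (real \<Rightarrow> complex) \<Rightarrow> real" where
  "S_norm N B h f = Sup (S_vals N B h f)"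

text \<open>The Banach space S^{B,h}_{N,h}(R) (N weights x^p, B weights derivatives).\<close>
definition S_space :: "(nat \<Rightarrow> real) \<Rightarrow> (nat \<Rightarrow> real) \<Rightarrow> real \<Rightarrow> (real \<Rightarrow> complex) set" where
  "S_space N B h = {f. smooth_fun f \<and> bdd_above (S_vals N B h f)}"

definition S_top :: "(nat \<Rightarrow> real) \<Rightarrow> (nat \<Rightarrow> real) \<Rightarrow> real \<Rightarrow> (real \<Rightarrow> complex) topology" where
  "S_top N B h = topology (\<lambda>U. U \<subseteq> S_space N B h \<and>
     (\<forall>f\<in>U. \<exists>e>0. {g \<in> S_space N B h. S_norm N B h (\<lambda>x. g x - f x) < e} \<subseteq> U))"

definition S_ind :: "(nat \<Rightarrow> real) \<Rightarrow> (nat \<Rightarrow> real) \<Rightarrow> (real \<Rightarrow> complex) set" where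
  "S_ind N B = (\<Union>h\<in>{0<..}. S_space N B h)"

text \<open>Seminorms on the union whose restrictions to every step are continuous; they
  generate the (locally convex) inductive limit topology.\<close>
definition ind_seminorm :: "(nat \<Rightarrow> real) \<Rightarrow> (nat \<Rightarrow> real) \<Rightarrow> ((real \<Rightarrow> complex) \<Rightarrow> real) \<Rightarrow> bool" where
  "ind_seminorm N B s \<longleftrightarrow>
     (\<forall>f\<in>S_ind N B. s f \<ge> 0) \<and>
     (\<forall>f\<in>S_ind N B. \<forall>g\<in>S_ind N B. s (\<lambda>x. f x + g x) \<le> s f + s g) \<and>
     (\<forall>f\<in>S_ind N B. \<forall>c::complex. s (\<lambda>x. c * f x) = norm c * s f) \<and>
     (\<forall>h>0. continuous_map (S_top N B h) euclideanreal s)"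

definition S_ind_top :: "(nat \<Rightarrow> real) \<Rightarrow> (nat \<Rightarrow> real) \<Rightarrow> (real \<Rightarrow> complex) topology" where
  "S_ind_top N B = topology (\<lambda>U. U \<subseteq> S_ind N B \<and>
     (\<forall>f\<in>U. \<exists>s e. ind_seminorm N B s \<and> e > 0 \<and> {g \<in> S_ind N B. s (\<lambda>x. g x - f x) < e} \<subseteq> U))"

definition fourier :: "(real \<Rightarrow> complex) \<Rightarrow> real \<Rightarrow> complex" where
  "fourier f \<xi> = integral\<^sup>L lborel (\<lambda>x. f x * cis (x * \<xi>))"

definition inv_fourier :: "(real \<Rightarrow> complex) \<Rightarrow> real \<Rightarrow> complex" where
  "inv_fourier f \<xi> = complex_of_real (1 / (2 * pi)) * fourier f (- \<xi>)"

end

theory Submission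
  imports Defs "HOL-Probability.Characteristic_Functions" "HOL-Probability.Sinc_Integral"
begin

lemma vder_deriv:
  assumes "smooth_fun f"
  shows "(vder f k has_vector_derivative vder f (Suc k) x) (at x)"
  using assms[unfolded smooth_fun_def, rule_format, of k x]
  by (simp add: vector_derivative_works)

lemma vder_deriv2:
  assumes "smooth_fun f"
  shows "(vder f k has_vector_derivative vector_derivative (vder f k) (at x)) (at x)"
  using assms[unfolded smooth_fun_def, rule_format, of k x]
  by (simp add: vector_derivative_works)

lemma vder_cont:
  assumes "smooth_fun f"
  shows "continuous_on UNIV (vder f k)"
  using assms unfolding smooth_fun_def
  by (meson continuous_at_imp_continuous_on differentiable_imp_continuous_within)

lemma vder_diff:
  assumes "smooth_fun f" "smooth_fun g"
  shows "vder (\<lambda>x. f x - g x) k = (\<lambda>x. vder f k x - vder g k x)"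
proof (induction k)
  case 0
  then show ?case by simp
next
  case (Suc k)
  show ?case
    by (simp add: Suc.IH, rule ext, rule vector_derivative_at,
        intro has_vector_derivative_diff vder_deriv2 assms)
qed

lemma smooth_diff:
  assumes "smooth_fun f" "smooth_fun g"
  shows "smooth_fun (\<lambda>x. f x - g x)"
  unfolding smooth_fun_def vder_diff[OF assms]
  using assms unfolding smooth_fun_def by (auto intro!: differentiable_diff)

lemma vder_refl:
  assumes "smooth_fun G"
  shows "vder (\<lambda>\<xi>. c * G (- \<xi>)) k = (\<lambda>\<xi>. c * (-1)^k * vder G k (- \<xi>))"
proof (induction k)
  case 0
  then show ?case by simp
next
  case (Suc k)
  have d: "((\<lambda>\<xi>. c * (-1)^k * vder G k (- \<xi>)) has_vector_derivative
          c * (-1)^(Suc k) * vder G (Suc k) (- \<xi>)) (at \<xi>)" for \<xi>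
  proof -
    have u: "((\<lambda>x::real. - x) has_vector_derivative (-1::real)) (at \<xi>)"
      using has_vector_derivative_minus[OF has_vector_derivative_id] by simp
    have "((vder G k \<circ> (\<lambda>x::real. - x)) has_vector_derivative ((-1::real) *\<^sub>R vder G (Suc k) (- \<xi>))) (at \<xi>)"
      using vector_diff_chain_at[OF u, of "vder G k" "vder G (Suc k) (- \<xi>)"] vder_deriv[OF assms, of k "- \<xi>"]
      by simp
    then have "((\<lambda>\<xi>. vder G k (- \<xi>)) has_vector_derivative (- vder G (Suc k) (- \<xi>))) (at \<xi>)"
      by (simp add: o_def)
    then have "((\<lambda>\<xi>. (c * (-1)^k) * vder G k (- \<xi>)) has_vector_derivative
          (c * (-1)^k) * (- vder G (Suc k) (- \<xi>))) (at \<xi>)"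
      by (rule has_vector_derivative_mult_right)
    then show ?thesis by simp
  qed
  show ?case
  proof (rule ext)
    fix \<xi>
    have "vder (\<lambda>\<xi>. c * G (- \<xi>)) (Suc k) \<xi> = vector_derivative (\<lambda>\<xi>. c * (-1)^k * vder G k (- \<xi>)) (at \<xi>)"
      using Suc.IH by simp
    also have "\<dots> = c * (-1)^(Suc k) * vder G (Suc k) (- \<xi>)"
      by (rule vector_derivative_at[OF d])
    finally show "vder (\<lambda>\<xi>. c * G (- \<xi>)) (Suc k) \<xi> = c * (-1)^(Suc k) * vder G (Suc k) (- \<xi>)" .
  qed
qed

lemma smooth_refl:
  assumes "smooth_fun G"
  shows "smooth_fun (\<lambda>\<xi>. c * G (- \<xi>))"
  unfolding smooth_fun_def vder_refl[OF assms]
proof (intro allI)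
  fix k x
  have "vder G k differentiable at (- x)" using assms unfolding smooth_fun_def by auto
  then have "(vder G k \<circ> uminus) differentiable at x"
    by (intro differentiable_chain_at) auto
  then have "(\<lambda>\<xi>. vder G k (- \<xi>)) differentiable at x" by (simp add: o_def)
  then show "(\<lambda>\<xi>. c * (- 1) ^ k * vder G k (- \<xi>)) differentiable at x"
    by (intro differentiable_mult differentiable_const)
qed

section \<open>Pointwise bounds in S_space\<close>

lemma S_vals_ne: "S_vals N B h f \<noteq> {}"
  unfolding S_vals_def by blast

lemma S_bound:
  assumes f: "f \<in> S_space N B h" and pos: "N p > 0" "B q > 0" "h > 0"
  shows "norm (complex_of_real (x^p) * vder f q x) \<le> S_norm N B h f * (h^(p+q) * N p * B q)"
proof -
  have "norm (complex_of_real (x^p) * vder f q x) / (h^(p+q) * N p * B q) \<in> S_vals N B h f"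
    unfolding S_vals_def by blast
  then have "norm (complex_of_real (x^p) * vder f q x) / (h^(p+q) * N p * B q) \<le> S_norm N B h f"
    unfolding S_norm_def using f unfolding S_space_def by (auto intro: cSup_upper)
  moreover have "h^(p+q) * N p * B q > 0" using pos by simp
  ultimately show ?thesis by (simp add: divide_le_eq)
qed

lemma S_norm_nonneg:
  assumes f: "f \<in> S_space N B h" and pos: "N 0 > 0" "B 0 > 0" "h > 0"
  shows "S_norm N B h f \<ge> 0"
proof -
  have a: "norm (complex_of_real (0^0) * vder f 0 0) \<le> S_norm N B h f * (h^(0+0) * N 0 * B 0)"
    by (rule S_bound[OF f pos])
  have "cmod (f 0) \<le> S_norm N B h f * (N 0 * B 0)" using a by simp
  then have "0 \<le> S_norm N B h f * (N 0 * B 0)" using norm_ge_zero[of "f 0"] by linarith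
  moreover have "0 < N 0 * B 0" using pos by simp
  ultimately show ?thesis by (auto simp: zero_le_mult_iff)
qed

lemma S_memI:
  assumes sm: "smooth_fun g"
    and bd: "\<And>p q x. norm (complex_of_real (x^p) * vder g q x) \<le> K * (h^(p+q) * N p * B q)"
    and pos: "\<forall>p. N p > 0" "\<forall>q. B q > 0" "h > 0"
  shows "g \<in> S_space N B h" "S_norm N B h g \<le> K"
proof -
  have le: "v \<le> K" if "v \<in> S_vals N B h g" for v
  proof -
    from that obtain p q x where v: "v = norm (complex_of_real (x^p) * vder g q x) / (h^(p+q) * N p * B q)"
      unfolding S_vals_def by blast
    have "h^(p+q) * N p * B q > 0" using pos by simp
    then show ?thesis unfolding v using bd[of x p q] by (simp add: divide_le_eq)
  qed
  then have "bdd_above (S_vals N B h g)" by (meson bdd_aboveI)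
  then show "g \<in> S_space N B h" unfolding S_space_def using sm by auto
  show "S_norm N B h g \<le> K" unfolding S_norm_def using le S_vals_ne by (intro cSup_least) auto
qed

lemma S_space_diff:
  assumes f: "f \<in> S_space N B h" and g: "g \<in> S_space N B h"
    and pos: "\<forall>p. N p > 0" "\<forall>q. B q > 0" "h > 0"
  shows "(\<lambda>x. f x - g x) \<in> S_space N B h"
proof -
  have sf: "smooth_fun f" "smooth_fun g" using f g unfolding S_space_def by auto
  have "norm (complex_of_real (x^p) * vder (\<lambda>x. f x - g x) q x)
        \<le> (S_norm N B h f + S_norm N B h g) * (h^(p+q) * N p * B q)" for x p q
  proof -
    have "norm (complex_of_real (x^p) * vder (\<lambda>x. f x - g x) q x)
        = norm (complex_of_real (x^p) * vder f q x - complex_of_real (x^p) * vder g q x)"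
      by (simp add: vder_diff[OF sf] algebra_simps)
    also have "\<dots> \<le> norm (complex_of_real (x^p) * vder f q x) + norm (complex_of_real (x^p) * vder g q x)"
      by (rule norm_triangle_ineq4)
    also have "\<dots> \<le> S_norm N B h f * (h^(p+q) * N p * B q) + S_norm N B h g * (h^(p+q) * N p * B q)"
      using S_bound[OF f] S_bound[OF g] pos by (intro add_mono) auto
    finally show ?thesis by (simp add: algebra_simps)
  qed
  then show ?thesis using S_memI(1)[OF smooth_diff[OF sf] _ pos] by blast
qed

lemma S_space_mono:
  assumes f: "f \<in> S_space N B h" and pos: "\<forall>p. N p > 0" "\<forall>q. B q > 0" "h > 0" and hh: "h \<le> h'"
  shows "f \<in> S_space N B h'"
proof -
  have sf: "smooth_fun f" using f unfolding S_space_def by auto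
  have "norm (complex_of_real (x^p) * vder f q x) \<le> S_norm N B h f * (h'^(p+q) * N p * B q)" for x p q
  proof -
    have "norm (complex_of_real (x^p) * vder f q x) \<le> S_norm N B h f * (h^(p+q) * N p * B q)"
      using S_bound[OF f] pos by auto
    also have "\<dots> \<le> S_norm N B h f * (h'^(p+q) * N p * B q)"
      using pos hh S_norm_nonneg[OF f] by (intro mult_left_mono mult_right_mono power_mono) (simp_all add: less_imp_le)
    finally show ?thesis .
  qed
  then show ?thesis by (rule S_memI(1)[OF sf]) (use pos hh in auto)
qed

section \<open>Topologies\<close>

lemma istopologyI':
  assumes "\<And>S T. L S \<Longrightarrow> L T \<Longrightarrow> L (S \<inter> T)" "\<And>K. (\<And>S. S \<in> K \<Longrightarrow> L S) \<Longrightarrow> L (\<Union>K)"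
  shows "istopology L"
  unfolding istopology_def
proof (intro conjI allI impI)
  fix S T assume "L S" "L T" then show "L (S \<inter> T)" by (rule assms(1))
next
  fix K assume "\<forall>S\<in>K. L S" then show "L (\<Union>K)" by (intro assms(2)) simp
qed

lemma istop_S:
  "istopology (\<lambda>U. U \<subseteq> S_space N B h \<and>
     (\<forall>f\<in>U. \<exists>e>0. {g \<in> S_space N B h. S_norm N B h (\<lambda>x. g x - f x) < e} \<subseteq> U))"
proof (rule istopologyI')
  fix S T assume S: "S \<subseteq> S_space N B h \<and> (\<forall>f\<in>S. \<exists>e>0. {g \<in> S_space N B h. S_norm N B h (\<lambda>x. g x - f x) < e} \<subseteq> S)"
    and T: "T \<subseteq> S_space N B h \<and> (\<forall>f\<in>T. \<exists>e>0. {g \<in> S_space N B h. S_norm N B h (\<lambda>x. g x - f x) < e} \<subseteq> T)"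
  have *: "\<exists>e>0. {g \<in> S_space N B h. S_norm N B h (\<lambda>x. g x - f x) < e} \<subseteq> S \<inter> T" if f: "f \<in> S \<inter> T" for f
  proof -
    have fS: "f \<in> S" and fT: "f \<in> T" using f by auto
    obtain e1 where "e1 > 0" "{g \<in> S_space N B h. S_norm N B h (\<lambda>x. g x - f x) < e1} \<subseteq> S"
      using bspec[OF conjunct2[OF S] fS] by (elim exE conjE)
    moreover obtain e2 where "e2 > 0" "{g \<in> S_space N B h. S_norm N B h (\<lambda>x. g x - f x) < e2} \<subseteq> T"
      using bspec[OF conjunct2[OF T] fT] by (elim exE conjE)
    ultimately show ?thesis by (intro exI[of _ "min e1 e2"]) auto
  qed
  have **: "S \<inter> T \<subseteq> S_space N B h" using S by auto
  show "S \<inter> T \<subseteq> S_space N B h \<and> (\<forall>f\<in>S \<inter> T. \<exists>e>0. {g \<in> S_space N B h. S_norm N B h (\<lambda>x. g x - f x) < e} \<subseteq> S \<inter> T)"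
  proof (intro conjI ballI)
    show "S \<inter> T \<subseteq> S_space N B h" by (rule **)
    fix f assume "f \<in> S \<inter> T" then show "\<exists>e>0. {g \<in> S_space N B h. S_norm N B h (\<lambda>x. g x - f x) < e} \<subseteq> S \<inter> T" by (rule *)
  qed
next
  fix K assume K: "\<And>S. S \<in> K \<Longrightarrow> S \<subseteq> S_space N B h \<and> (\<forall>f\<in>S. \<exists>e>0. {g \<in> S_space N B h. S_norm N B h (\<lambda>x. g x - f x) < e} \<subseteq> S)"
  have *: "\<exists>e>0. {g \<in> S_space N B h. S_norm N B h (\<lambda>x. g x - f x) < e} \<subseteq> \<Union>K" if "f \<in> \<Union>K" for f
  proof -
    from that obtain S where S: "S \<in> K" "f \<in> S" by auto
    obtain e where "e > 0" "{g \<in> S_space N B h. S_norm N B h (\<lambda>x. g x - f x) < e} \<subseteq> S"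
      using bspec[OF conjunct2[OF K[OF S(1)]] S(2)] by (elim exE conjE)
    then show ?thesis using S(1) by (intro exI[of _ e]) auto
  qed
  have **: "\<Union>K \<subseteq> S_space N B h" using K by auto
  show "\<Union>K \<subseteq> S_space N B h \<and> (\<forall>f\<in>\<Union>K. \<exists>e>0. {g \<in> S_space N B h. S_norm N B h (\<lambda>x. g x - f x) < e} \<subseteq> \<Union>K)"
  proof (intro conjI ballI)
    show "\<Union>K \<subseteq> S_space N B h" by (rule **)
    fix f assume "f \<in> \<Union>K" then show "\<exists>e>0. {g \<in> S_space N B h. S_norm N B h (\<lambda>x. g x - f x) < e} \<subseteq> \<Union>K" by (rule *)
  qed
qed

lemma openin_S_top:
  "openin (S_top N B h) U \<longleftrightarrow> U \<subseteq> S_space N B h \<and>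
     (\<forall>f\<in>U. \<exists>e>0. {g \<in> S_space N B h. S_norm N B h (\<lambda>x. g x - f x) < e} \<subseteq> U)"
  unfolding S_top_def by (simp add: istop_S)

lemma topspace_S_top: "topspace (S_top N B h) = S_space N B h"
proof -
  have "openin (S_top N B h) (S_space N B h)" unfolding openin_S_top
    by (auto intro!: exI[of _ 1])
  moreover have "\<And>U. openin (S_top N B h) U \<Longrightarrow> U \<subseteq> S_space N B h" unfolding openin_S_top by blast
  ultimately show ?thesis unfolding topspace_def by blast
qed

lemma cont_step:
  assumes posX: "\<forall>p. NX p > 0" "\<forall>q. BX q > 0" "hX > 0"
    and maps: "\<And>u. u \<in> S_space NX BX hX \<Longrightarrow> T u \<in> S_space NY BY hY"
    and lin: "\<And>u v. u \<in> S_space NX BX hX \<Longrightarrow> v \<in> S_space NX BX hX \<Longrightarrow>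
               T (\<lambda>x. v x - u x) = (\<lambda>x. T v x - T u x)"
    and bnd: "\<And>u. u \<in> S_space NX BX hX \<Longrightarrow> S_norm NY BY hY (T u) \<le> K * S_norm NX BX hX u"
    and K: "K > 0"
  shows "continuous_map (S_top NX BX hX) (S_top NY BY hY) T"
  unfolding continuous_map_def topspace_S_top
proof (intro conjI allI impI)
  show "T \<in> S_space NX BX hX \<rightarrow> S_space NY BY hY" using maps by auto
  fix U assume U: "openin (S_top NY BY hY) U"
  show "openin (S_top NX BX hX) {x \<in> S_space NX BX hX. T x \<in> U}"
    unfolding openin_S_top
  proof (intro conjI ballI)
    show "{x \<in> S_space NX BX hX. T x \<in> U} \<subseteq> S_space NX BX hX" by auto
    fix f assume f: "f \<in> {x \<in> S_space NX BX hX. T x \<in> U}"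
    then obtain e where e: "e > 0" "{g \<in> S_space NY BY hY. S_norm NY BY hY (\<lambda>x. g x - T f x) < e} \<subseteq> U"
      using U unfolding openin_S_top by blast
    show "\<exists>e>0. {g \<in> S_space NX BX hX. S_norm NX BX hX (\<lambda>x. g x - f x) < e} \<subseteq> {x \<in> S_space NX BX hX. T x \<in> U}"
    proof (intro exI[of _ "e / K"] conjI subsetI)
      show "e / K > 0" using e K by simp
      fix g assume g: "g \<in> {g \<in> S_space NX BX hX. S_norm NX BX hX (\<lambda>x. g x - f x) < e / K}"
      then have gX: "g \<in> S_space NX BX hX" and fX: "f \<in> S_space NX BX hX" using f by auto
      have dX: "(\<lambda>x. g x - f x) \<in> S_space NX BX hX" by (rule S_space_diff[OF gX fX posX])
      have "S_norm NY BY hY (\<lambda>x. T g x - T f x) = S_norm NY BY hY (T (\<lambda>x. g x - f x))"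
        using lin[OF fX gX] by simp
      also have "\<dots> \<le> K * S_norm NX BX hX (\<lambda>x. g x - f x)" by (rule bnd[OF dX])
      also have "\<dots> < K * (e / K)" using g K by (intro mult_strict_left_mono) auto
      also have "\<dots> = e" using K by simp
      finally have "T g \<in> U" using e maps[OF gX] by blast
      then show "g \<in> {x \<in> S_space NX BX hX. T x \<in> U}" using gX by blast
    qed
  qed
qed

lemma S_ind_iff: "f \<in> S_ind N B \<longleftrightarrow> (\<exists>h>0. f \<in> S_space N B h)"
  unfolding S_ind_def by auto

lemma S_ind_diff:
  assumes f: "f \<in> S_ind N B" and g: "g \<in> S_ind N B" and pos: "\<forall>p. N p > 0" "\<forall>q. B q > 0"
  shows "(\<lambda>x. f x - g x) \<in> S_ind N B"
proof -
  obtain h1 h2 where h1: "h1 > 0" "f \<in> S_space N B h1" and h2: "h2 > 0" "g \<in> S_space N B h2"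
    using f g unfolding S_ind_iff by blast
  have "f \<in> S_space N B (max h1 h2)" by (rule S_space_mono[OF h1(2) pos h1(1)]) simp
  moreover have "g \<in> S_space N B (max h1 h2)" by (rule S_space_mono[OF h2(2) pos h2(1)]) simp
  ultimately have "(\<lambda>x. f x - g x) \<in> S_space N B (max h1 h2)"
    using S_space_diff pos h1(1) by (metis max.strict_coboundedI1)
  then show ?thesis unfolding S_ind_iff using h1(1) by (intro exI[of _ "max h1 h2"]) auto
qed

lemma ind_seminorm_zero: "ind_seminorm N B (\<lambda>_. 0)"
  unfolding ind_seminorm_def by auto

lemma max_abs_mult: "max (c * a) (c * b) = c * max a (b::real)" if "c \<ge> 0"
  using that by (cases "c = 0") (auto simp: max_def mult_le_cancel_left)

lemma ind_seminorm_max: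
  assumes s1: "ind_seminorm N B s1" and s2: "ind_seminorm N B s2"
  shows "ind_seminorm N B (\<lambda>f. max (s1 f) (s2 f))"
  unfolding ind_seminorm_def
proof (intro conjI ballI allI impI)
  fix f assume f: "f \<in> S_ind N B"
  show "0 \<le> max (s1 f) (s2 f)" using s1 f unfolding ind_seminorm_def by (auto simp: le_max_iff_disj)
  fix c :: complex
  show "max (s1 (\<lambda>x. c * f x)) (s2 (\<lambda>x. c * f x)) = cmod c * max (s1 f) (s2 f)"
    using s1 s2 f unfolding ind_seminorm_def by (simp add: max_abs_mult)
next
  fix f g assume f: "f \<in> S_ind N B" and g: "g \<in> S_ind N B"
  have a: "s1 (\<lambda>x. f x + g x) \<le> s1 f + s1 g" "s2 (\<lambda>x. f x + g x) \<le> s2 f + s2 g"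
    using s1 s2 f g unfolding ind_seminorm_def by auto
  then show "max (s1 (\<lambda>x. f x + g x)) (s2 (\<lambda>x. f x + g x)) \<le> max (s1 f) (s2 f) + max (s1 g) (s2 g)"
    by linarith
next
  fix h :: real assume "h > 0"
  then show "continuous_map (S_top N B h) euclideanreal (\<lambda>f. max (s1 f) (s2 f))"
    using s1 s2 unfolding ind_seminorm_def by (intro continuous_map_real_max) auto
qed

lemma istop_ind:
  "istopology (\<lambda>U. U \<subseteq> S_ind N B \<and>
     (\<forall>f\<in>U. \<exists>s e. ind_seminorm N B s \<and> e > 0 \<and> {g \<in> S_ind N B. s (\<lambda>x. g x - f x) < e} \<subseteq> U))"
proof (rule istopologyI')
  fix S T assume S: "S \<subseteq> S_ind N B \<and> (\<forall>f\<in>S. \<exists>s e. ind_seminorm N B s \<and> e > 0 \<and> {g \<in> S_ind N B. s (\<lambda>x. g x - f x) < e} \<subseteq> S)"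
    and T: "T \<subseteq> S_ind N B \<and> (\<forall>f\<in>T. \<exists>s e. ind_seminorm N B s \<and> e > 0 \<and> {g \<in> S_ind N B. s (\<lambda>x. g x - f x) < e} \<subseteq> T)"
  have *: "\<exists>s e. ind_seminorm N B s \<and> e > 0 \<and> {g \<in> S_ind N B. s (\<lambda>x. g x - f x) < e} \<subseteq> S \<inter> T" if f: "f \<in> S \<inter> T" for f
  proof -
    have fS: "f \<in> S" and fT: "f \<in> T" using f by auto
    obtain s1 e1 where 1: "ind_seminorm N B s1" "e1 > 0" "{g \<in> S_ind N B. s1 (\<lambda>x. g x - f x) < e1} \<subseteq> S"
      using bspec[OF conjunct2[OF S] fS] by (elim exE conjE)
    obtain s2 e2 where 2: "ind_seminorm N B s2" "e2 > 0" "{g \<in> S_ind N B. s2 (\<lambda>x. g x - f x) < e2} \<subseteq> T"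
      using bspec[OF conjunct2[OF T] fT] by (elim exE conjE)
    show ?thesis
    proof (intro exI conjI)
      show "ind_seminorm N B (\<lambda>u. max (s1 u) (s2 u))" by (rule ind_seminorm_max[OF 1(1) 2(1)])
      show "min e1 e2 > 0" using 1 2 by simp
      show "{g \<in> S_ind N B. max (s1 (\<lambda>x. g x - f x)) (s2 (\<lambda>x. g x - f x)) < min e1 e2} \<subseteq> S \<inter> T"
        using 1(3) 2(3) by auto
    qed
  qed
  have **: "S \<inter> T \<subseteq> S_ind N B" using S by auto
  show "S \<inter> T \<subseteq> S_ind N B \<and> (\<forall>f\<in>S \<inter> T. \<exists>s e. ind_seminorm N B s \<and> e > 0 \<and> {g \<in> S_ind N B. s (\<lambda>x. g x - f x) < e} \<subseteq> S \<inter> T)"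
  proof (intro conjI ballI)
    show "S \<inter> T \<subseteq> S_ind N B" by (rule **)
    fix f assume "f \<in> S \<inter> T" then show "\<exists>s e. ind_seminorm N B s \<and> e > 0 \<and> {g \<in> S_ind N B. s (\<lambda>x. g x - f x) < e} \<subseteq> S \<inter> T" by (rule *)
  qed
next
  fix K assume K: "\<And>S. S \<in> K \<Longrightarrow> S \<subseteq> S_ind N B \<and> (\<forall>f\<in>S. \<exists>s e. ind_seminorm N B s \<and> e > 0 \<and> {g \<in> S_ind N B. s (\<lambda>x. g x - f x) < e} \<subseteq> S)"
  have *: "\<exists>s e. ind_seminorm N B s \<and> e > 0 \<and> {g \<in> S_ind N B. s (\<lambda>x. g x - f x) < e} \<subseteq> \<Union>K" if "f \<in> \<Union>K" for f
  proof -
    from that obtain S where S: "S \<in> K" "f \<in> S" by auto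
    obtain s e where "ind_seminorm N B s" "e > 0" "{g \<in> S_ind N B. s (\<lambda>x. g x - f x) < e} \<subseteq> S"
      using bspec[OF conjunct2[OF K[OF S(1)]] S(2)] by (elim exE conjE)
    then show ?thesis using S(1) by (intro exI[of _ s] exI[of _ e]) auto
  qed
  have **: "\<Union>K \<subseteq> S_ind N B" using K by auto
  show "\<Union>K \<subseteq> S_ind N B \<and> (\<forall>f\<in>\<Union>K. \<exists>s e. ind_seminorm N B s \<and> e > 0 \<and> {g \<in> S_ind N B. s (\<lambda>x. g x - f x) < e} \<subseteq> \<Union>K)"
  proof (intro conjI ballI)
    show "\<Union>K \<subseteq> S_ind N B" by (rule **)
    fix f assume "f \<in> \<Union>K" then show "\<exists>s e. ind_seminorm N B s \<and> e > 0 \<and> {g \<in> S_ind N B. s (\<lambda>x. g x - f x) < e} \<subseteq> \<Union>K" by (rule *)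
  qed
qed

lemma openin_S_ind_top:
  "openin (S_ind_top N B) U \<longleftrightarrow> U \<subseteq> S_ind N B \<and>
     (\<forall>f\<in>U. \<exists>s e. ind_seminorm N B s \<and> e > 0 \<and> {g \<in> S_ind N B. s (\<lambda>x. g x - f x) < e} \<subseteq> U)"
  unfolding S_ind_top_def topology_inverse'[OF istop_ind] by (rule refl)

lemma topspace_S_ind_top: "topspace (S_ind_top N B) = S_ind N B"
proof -
  have "openin (S_ind_top N B) (S_ind N B)" unfolding openin_S_ind_top
    using ind_seminorm_zero by (auto intro!: exI[of _ 1] exI[of _ "\<lambda>_. 0"])
  moreover have "\<And>U. openin (S_ind_top N B) U \<Longrightarrow> U \<subseteq> S_ind N B" unfolding openin_S_ind_top by blast
  ultimately show ?thesis unfolding topspace_def by blast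
qed

lemma cont_ind:
  assumes maps: "\<And>u. u \<in> S_ind NX BX \<Longrightarrow> T u \<in> S_ind NY BY"
    and add: "\<And>u v. u \<in> S_ind NX BX \<Longrightarrow> v \<in> S_ind NX BX \<Longrightarrow> T (\<lambda>x. u x + v x) = (\<lambda>x. T u x + T v x)"
    and smul: "\<And>u c. u \<in> S_ind NX BX \<Longrightarrow> T (\<lambda>x. c * u x) = (\<lambda>x. c * T u x)"
    and diff: "\<And>u v. u \<in> S_ind NX BX \<Longrightarrow> v \<in> S_ind NX BX \<Longrightarrow> T (\<lambda>x. v x - u x) = (\<lambda>x. T v x - T u x)"
    and step: "\<And>h. h > 0 \<Longrightarrow> \<exists>h'>0. continuous_map (S_top NX BX h) (S_top NY BY h') T"
    and posX: "\<forall>p. NX p > 0" "\<forall>q. BX q > 0"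
  shows "continuous_map (S_ind_top NX BX) (S_ind_top NY BY) T"
  unfolding continuous_map_def topspace_S_ind_top
proof (intro conjI allI impI)
  show "T \<in> S_ind NX BX \<rightarrow> S_ind NY BY" using maps by auto
  fix U assume U: "openin (S_ind_top NY BY) U"
  show "openin (S_ind_top NX BX) {x \<in> S_ind NX BX. T x \<in> U}"
    unfolding openin_S_ind_top
  proof (intro conjI ballI)
    show "{x \<in> S_ind NX BX. T x \<in> U} \<subseteq> S_ind NX BX" by auto
    fix f assume f: "f \<in> {x \<in> S_ind NX BX. T x \<in> U}"
    then have fX: "f \<in> S_ind NX BX" and fU: "T f \<in> U" by auto
    obtain t e where t: "ind_seminorm NY BY t" and e: "e > 0"
      and ball: "{g \<in> S_ind NY BY. t (\<lambda>x. g x - T f x) < e} \<subseteq> U"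
      using bspec[OF conjunct2[OF U[unfolded openin_S_ind_top]] fU] by (elim exE conjE)
    have sn: "ind_seminorm NX BX (\<lambda>u. t (T u))"
      unfolding ind_seminorm_def
    proof (intro conjI ballI allI impI)
      fix u assume u: "u \<in> S_ind NX BX"
      show "0 \<le> t (T u)" using t maps[OF u] unfolding ind_seminorm_def by auto
      fix c :: complex
      show "t (T (\<lambda>x. c * u x)) = cmod c * t (T u)"
        using t maps[OF u] smul[OF u] unfolding ind_seminorm_def by auto
    next
      fix u v assume u: "u \<in> S_ind NX BX" and v: "v \<in> S_ind NX BX"
      show "t (T (\<lambda>x. u x + v x)) \<le> t (T u) + t (T v)"
        using t maps[OF u] maps[OF v] add[OF u v] unfolding ind_seminorm_def by auto
    next
      fix h :: real assume h: "h > 0"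
      obtain h' where h': "h' > 0" "continuous_map (S_top NX BX h) (S_top NY BY h') T"
        using step[OF h] by blast
      have "continuous_map (S_top NY BY h') euclideanreal t"
        using t h'(1) unfolding ind_seminorm_def by auto
      then have "continuous_map (S_top NX BX h) euclideanreal (t \<circ> T)"
        by (rule continuous_map_compose[OF h'(2)])
      then show "continuous_map (S_top NX BX h) euclideanreal (\<lambda>u. t (T u))"
        by (simp add: o_def)
    qed
    show "\<exists>s e. ind_seminorm NX BX s \<and> e > 0 \<and> {g \<in> S_ind NX BX. s (\<lambda>x. g x - f x) < e} \<subseteq> {x \<in> S_ind NX BX. T x \<in> U}"
    proof (intro exI conjI subsetI)
      show "ind_seminorm NX BX (\<lambda>u. t (T u))" by (rule sn)
      show "e > 0" by (rule e)
      fix g assume g: "g \<in> {g \<in> S_ind NX BX. t (T (\<lambda>x. g x - f x)) < e}"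
      then have gX: "g \<in> S_ind NX BX" by auto
      have "t (\<lambda>x. T g x - T f x) < e" using g diff[OF fX gX] by auto
      then have "T g \<in> U" using ball maps[OF gX] by blast
      then show "g \<in> {x \<in> S_ind NX BX. T x \<in> U}" using gX by blast
    qed
  qed
qed

lemma cauchy_int:
  assumes T: "T > 0"
  shows "integrable lborel (\<lambda>x::real. inverse (1 + (x/T)^2))"
    and "integral\<^sup>L lborel (\<lambda>x::real. inverse (1 + (x/T)^2)) = T * pi"
proof -
  have i0: "integrable lborel (\<lambda>x::real. inverse (1 + x^2))"
    using integrable_inverse_1_plus_square by (simp add: set_integrable_def einterval_eq_UNIV)
  have v0: "integral\<^sup>L lborel (\<lambda>x::real. inverse (1 + x^2)) = pi"
    using LBINT_inverse_1_plus_square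
    by (simp add: interval_lebesgue_integral_def set_lebesgue_integral_def einterval_eq_UNIV)
  have "integrable lborel (\<lambda>x::real. inverse (1 + (0 + (1/T) * x)^2))"
    using lborel_integrable_real_affine[OF i0, of "1/T" 0] T by simp
  then show "integrable lborel (\<lambda>x::real. inverse (1 + (x/T)^2))" by simp
  have "integral\<^sup>L lborel (\<lambda>x::real. inverse (1 + x^2)) = \<bar>1/T\<bar> *\<^sub>R integral\<^sup>L lborel (\<lambda>x::real. inverse (1 + (0 + (1/T) * x)^2))"
    using T by (intro lborel_integral_real_affine) simp
  then show "integral\<^sup>L lborel (\<lambda>x::real. inverse (1 + (x/T)^2)) = T * pi"
    using T v0 by (simp add: field_simps)
qed

lemma log_int:
  fixes R S :: real
  assumes R: "0 < R" "R \<le> S"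
  shows "integrable lborel (\<lambda>x. indicator {R..S} x *\<^sub>R (1/x))"
    and "integral\<^sup>L lborel (\<lambda>x. indicator {R..S} x *\<^sub>R (1/x)) = ln S - ln R"
proof -
  have c: "continuous_on {R..S} (\<lambda>x::real. 1/x)" using R by (intro continuous_intros) auto
  show "integrable lborel (\<lambda>x. indicator {R..S} x *\<^sub>R (1/x))"
    using borel_integrable_atLeastAtMost'[OF c] by (simp add: set_integrable_def)
  show "integral\<^sup>L lborel (\<lambda>x. indicator {R..S} x *\<^sub>R (1/x)) = ln S - ln R"
  proof (rule integral_FTC_atLeastAtMost[OF R(2) _ c])
    fix x assume "R \<le> x" "x \<le> S"
    then have "x > 0" using R by simp
    then have "(ln has_real_derivative 1/x) (at x within {R..S})"
      by (rule has_field_derivative_at_within[OF DERIV_ln_divide])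
    then show "(ln has_vector_derivative 1/x) (at x within {R..S})"
      by (simp add: has_real_derivative_iff_has_vector_derivative)
  qed
qed

lemma log_int_neg:
  fixes R S :: real
  assumes R: "0 < R" "R \<le> S"
  shows "integrable lborel (\<lambda>x. indicator {R..S} (-x) *\<^sub>R (1/(-x)))"
    and "integral\<^sup>L lborel (\<lambda>x. indicator {R..S} (-x) *\<^sub>R (1/(-x))) = ln S - ln R"
proof -
  show "integrable lborel (\<lambda>x. indicator {R..S} (-x) *\<^sub>R (1/(-x)))"
    using lborel_integrable_real_affine[OF log_int(1)[OF R], of "-1" 0] by simp
  have "integral\<^sup>L lborel (\<lambda>x. indicator {R..S} x *\<^sub>R (1/x)) =
     \<bar>-1\<bar> *\<^sub>R integral\<^sup>L lborel (\<lambda>x. indicator {R..S} (0 + (-1) * x) *\<^sub>R (1/(0 + (-1) * x)))"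
    by (intro lborel_integral_real_affine) simp
  then show "integral\<^sup>L lborel (\<lambda>x. indicator {R..S} (-x) *\<^sub>R (1/(-x))) = ln S - ln R"
    using log_int(2)[OF R] by simp
qed

lemma majorant_int:
  fixes g :: "real \<Rightarrow> complex"
  assumes gm: "g \<in> borel_measurable lborel"
    and b: "b0 > 0" "b1 > 0" "b2 > 0" "b1/b0 \<le> b2/b1" "c \<ge> 0"
    and g0: "\<And>x. norm (g x) \<le> c * b0"
    and g1: "\<And>x. \<bar>x\<bar> * norm (g x) \<le> c * b1"
    and g2: "\<And>x. x^2 * norm (g x) \<le> c * b2"
  shows "integrable lborel g"
    and "integral\<^sup>L lborel (\<lambda>x. norm (g x)) \<le> c * b1 * (4*pi + 2 * ln (b2*b0/b1^2))"
proof -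
  define R where "R = b1/b0"
  define S where "S = b2/b1"
  have R: "R > 0" "R \<le> S" "S > 0" using b unfolding R_def S_def by auto
  define \<psi> where "\<psi> x = 2*b0 * inverse (1 + (x/R)^2) + 2*b2/S^2 * inverse (1 + (x/S)^2)
     + b1 * (indicator {R..S} x *\<^sub>R (1/x) + indicator {R..S} (-x) *\<^sub>R (1/(-x)))" for x
  have ipsi: "integrable lborel \<psi>"
    unfolding \<psi>_def using cauchy_int(1)[OF R(1)] cauchy_int(1)[OF R(3)] log_int(1)[OF R(1,2)] log_int_neg(1)[OF R(1,2)]
    by (intro Bochner_Integration.integrable_add Bochner_Integration.integrable_mult_right) auto
  have vpsi: "integral\<^sup>L lborel \<psi> = 2*b0*(R*pi) + 2*b2/S^2*(S*pi) + b1 * ((ln S - ln R) + (ln S - ln R))"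
    unfolding \<psi>_def using cauchy_int[OF R(1)] cauchy_int[OF R(3)] log_int[OF R(1,2)] log_int_neg[OF R(1,2)]
    by (simp add: integrable_add integrable_mult_right)
  have "2*b0*(R*pi) = 2*pi*b1" unfolding R_def using b by simp
  moreover have "2*b2/S^2*(S*pi) = 2*pi*b1" unfolding S_def using b by (simp add: power2_eq_square)
  moreover have "ln S - ln R = ln (b2*b0/b1^2)"
  proof -
    have "ln S - ln R = ln (S/R)" using R by (simp add: ln_div)
    also have "S/R = b2*b0/b1^2" unfolding R_def S_def using b by (simp add: field_simps power2_eq_square)
    finally show ?thesis .
  qed
  ultimately have vpsi': "integral\<^sup>L lborel \<psi> = b1 * (4*pi + 2 * ln (b2*b0/b1^2))"
    using vpsi by (simp add: algebra_simps)
  have ind_nonneg: "0 \<le> indicator {R..S} x *\<^sub>R (1/x) + indicator {R..S} (-x) *\<^sub>R (1/(-x))" for x :: real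
    using R by (auto simp: indicator_def)
  have psi_nonneg: "\<psi> x \<ge> 0" for x
  proof -
    have "0 \<le> 2*b0 * inverse (1 + (x/R)^2)" using b by simp
    moreover have "0 \<le> 2*b2/S^2 * inverse (1 + (x/S)^2)" using b by simp
    moreover have "0 \<le> b1 * (indicator {R..S} x *\<^sub>R (1/x) + indicator {R..S} (-x) *\<^sub>R (1/(-x)))"
      using b ind_nonneg[of x] by simp
    ultimately show ?thesis unfolding \<psi>_def by linarith
  qed
  have P1: "0 \<le> 2*b0 * inverse (1 + (x/R)^2)" for x using b by simp
  have P2: "0 \<le> 2*b2/S^2 * inverse (1 + (x/S)^2)" for x using b by simp
  have P3: "0 \<le> b1 * (indicator {R..S} x *\<^sub>R (1/x) + indicator {R..S} (-x) *\<^sub>R (1/(-x)))" for x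
    using b ind_nonneg[of x] by simp
  have bound: "norm (g x) \<le> c * \<psi> x" for x
  proof -
    have "\<exists>k. norm (g x) \<le> c * k \<and> k \<le> \<psi> x"
    proof -
      consider "\<bar>x\<bar> \<le> R" | "\<bar>x\<bar> \<ge> S" | "R < \<bar>x\<bar>" "\<bar>x\<bar> < S" by linarith
      then show ?thesis
      proof cases
        case 1
        have a: "\<bar>x/R\<bar> \<le> 1" using 1 R by (simp add: abs_divide)
        have "(x/R)^2 \<le> 1^2" using a abs_le_square_iff[of "x/R" 1] by simp
        then have "(x/R)^2 \<le> 1" by simp
        moreover have aux: "\<And>t::real. 0 \<le> t \<Longrightarrow> t \<le> 1 \<Longrightarrow> 1 \<le> 2 * inverse (1 + t)"
          by (simp add: field_simps)
        ultimately have "1 \<le> 2 * inverse (1 + (x/R)^2)" by simp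
        then have "b0 * 1 \<le> b0 * (2 * inverse (1 + (x/R)^2))" by (rule mult_left_mono) (use b in simp)
        then have "b0 \<le> 2*b0 * inverse (1 + (x/R)^2)" by (simp add: ac_simps)
        then have "b0 \<le> \<psi> x" unfolding \<psi>_def using P2[of x] P3[of x] by linarith
        then show ?thesis using g0[of x] by blast
      next
        case 2
        have "\<bar>S\<bar> \<le> \<bar>x\<bar>" using 2 R by simp
        then have "S^2 \<le> x^2" by (simp add: abs_le_square_iff)
        moreover have "x \<noteq> 0" using 2 R by auto
        ultimately have x0: "x^2 > 0" "x^2 \<ge> S^2" by auto
        have e: "2*b2/S^2 * inverse (1 + (x/S)^2) = 2*b2 / (S^2 + x^2)" using R by (simp add: field_simps power2_eq_square)
        have "b2 / x^2 = (2*b2) / (2*x^2)" by simp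
        also have "\<dots> \<le> 2*b2 / (S^2 + x^2)"
          using x0 b R by (intro divide_left_mono) (auto intro!: mult_pos_pos add_pos_pos)
        finally have "b2 / x^2 \<le> 2*b2/S^2 * inverse (1 + (x/S)^2)" unfolding e .
        then have "b2 / x^2 \<le> \<psi> x" unfolding \<psi>_def using P1[of x] P3[of x] by linarith
        moreover have "norm (g x) \<le> c * (b2 / x^2)" using g2[of x] x0 by (simp add: field_simps)
        ultimately show ?thesis by blast
      next
        case 3
        have xa: "\<bar>x\<bar> > 0" using 3 R by simp
        have "indicator {R..S} x *\<^sub>R (1/x) + indicator {R..S} (-x) *\<^sub>R (1/(-x)) = 1/\<bar>x\<bar>"
          using 3 R by (cases "x \<ge> 0") (auto simp: indicator_def)
        then have "b1 / \<bar>x\<bar> \<le> \<psi> x" unfolding \<psi>_def using P1[of x] P2[of x] by simp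
        moreover have "norm (g x) \<le> c * (b1 / \<bar>x\<bar>)" using g1[of x] xa by (simp add: field_simps)
        ultimately show ?thesis by blast
      qed
    qed
    then obtain k where k: "norm (g x) \<le> c * k" "k \<le> \<psi> x" by blast
    have "c * k \<le> c * \<psi> x" using k(2) b(5) by (rule mult_left_mono)
    then show ?thesis using k(1) by linarith
  qed
  show ig: "integrable lborel g"
  proof (rule Bochner_Integration.integrable_bound[OF _ gm])
    show "integrable lborel (\<lambda>x. c * \<psi> x)" using ipsi by simp
    show "AE x in lborel. norm (g x) \<le> norm (c * \<psi> x)"
      using bound psi_nonneg b(5) by (auto simp: abs_mult)
  qed
  have "integral\<^sup>L lborel (\<lambda>x. norm (g x)) \<le> integral\<^sup>L lborel (\<lambda>x. c * \<psi> x)"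
    using ig ipsi bound by (intro integral_mono) auto
  also have "\<dots> = c * (b1 * (4*pi + 2 * ln (b2*b0/b1^2)))" using vpsi' by simp
  finally show "integral\<^sup>L lborel (\<lambda>x. norm (g x)) \<le> c * b1 * (4*pi + 2 * ln (b2*b0/b1^2))"
    by (simp add: mult.assoc)
qed

lemma cont_meas: "continuous_on UNIV g \<Longrightarrow> g \<in> borel_measurable lborel"
  by (simp add: borel_measurable_continuous_onI)

lemma cis_meas: "(\<lambda>x. cis (x * \<xi>)) \<in> borel_measurable lborel"
  by (rule cont_meas) (intro continuous_intros)

lemma int_cis:
  assumes "integrable lborel g"
  shows "integrable lborel (\<lambda>x. g x * cis (x * \<xi>))"
proof (rule Bochner_Integration.integrable_bound[OF assms])
  have "g \<in> borel_measurable lborel" using assms by (rule borel_measurable_integrable)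
  then show "(\<lambda>x. g x * cis (x * \<xi>)) \<in> borel_measurable lborel"
    using cis_meas by (intro borel_measurable_times) auto
  show "AE x in lborel. norm (g x * cis (x * \<xi>)) \<le> norm (g x)"
    by (simp add: norm_mult)
qed

lemma fourier_bound: "norm (fourier g \<xi>) \<le> integral\<^sup>L lborel (\<lambda>x. norm (g x))"
  unfolding fourier_def using integral_norm_bound[of lborel "\<lambda>x. g x * cis (x * \<xi>)"]
  by (simp add: norm_mult)

lemma fourier_add:
  assumes "integrable lborel f" "integrable lborel g"
  shows "fourier (\<lambda>x. f x + g x) \<xi> = fourier f \<xi> + fourier g \<xi>"
  unfolding fourier_def using int_cis[OF assms(1)] int_cis[OF assms(2)]
  by (simp add: distrib_right)

lemma fourier_diff:
  assumes "integrable lborel f" "integrable lborel g"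
  shows "fourier (\<lambda>x. f x - g x) \<xi> = fourier f \<xi> - fourier g \<xi>"
  unfolding fourier_def using int_cis[OF assms(1)] int_cis[OF assms(2)]
  by (simp add: left_diff_distrib)

lemma fourier_cmult: "fourier (\<lambda>x. c * f x) \<xi> = c * fourier f \<xi>"
  unfolding fourier_def by (simp add: mult.assoc)

lemma cis_expand_bound:
  "norm (cis (x * \<eta>) - cis (x * \<xi>) - complex_of_real (\<eta> - \<xi>) * (\<i> * complex_of_real x * cis (x * \<xi>)))
     \<le> (x * (\<eta> - \<xi>))^2 / 2"
proof -
  let ?t = "x * (\<eta> - \<xi>)"
  have "cis (x * \<eta>) = cis (x * \<xi>) * cis ?t" by (simp add: cis_mult algebra_simps)
  then have "cis (x * \<eta>) - cis (x * \<xi>) - complex_of_real (\<eta> - \<xi>) * (\<i> * complex_of_real x * cis (x * \<xi>))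
      = cis (x * \<xi>) * (cis ?t - (1 + \<i> * complex_of_real ?t))"
    by (simp add: algebra_simps)
  then have "norm (cis (x * \<eta>) - cis (x * \<xi>) - complex_of_real (\<eta> - \<xi>) * (\<i> * complex_of_real x * cis (x * \<xi>)))
      = norm (cis ?t - (1 + \<i> * complex_of_real ?t))"
    by (simp add: norm_mult)
  also have "\<dots> = cmod (iexp ?t - (\<Sum>k \<le> 1. (\<i> * complex_of_real ?t)^k / fact k))"
    by (simp add: cis_conv_exp)
  also have "\<dots> \<le> \<bar>?t\<bar>^(Suc 1) / fact (Suc 1)" by (rule iexp_approx1)
  also have "\<dots> = ?t^2 / 2" by (simp add: power2_eq_square)
  finally show ?thesis .
qed

lemma fourier_deriv:
  assumes i0: "integrable lborel g"
    and i1: "integrable lborel (\<lambda>x. complex_of_real x * g x)"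
    and i2: "integrable lborel (\<lambda>x. complex_of_real (x^2) * g x)"
  shows "(fourier g has_vector_derivative fourier (\<lambda>x. \<i> * complex_of_real x * g x) \<xi>) (at \<xi>)"
proof -
  define D where "D = fourier (\<lambda>x. \<i> * complex_of_real x * g x) \<xi>"
  define K where "K = integral\<^sup>L lborel (\<lambda>x. norm (complex_of_real (x^2) * g x))"
  have i1': "integrable lborel (\<lambda>x. \<i> * complex_of_real x * g x)"
    using i1 by (simp add: mult.assoc)
  have key: "norm (fourier g \<eta> - fourier g \<xi> - (\<eta> - \<xi>) *\<^sub>R D) \<le> (\<eta> - \<xi>)^2 / 2 * K" for \<eta>
  proof -
    let ?h = "\<lambda>x. g x * (cis (x * \<eta>) - cis (x * \<xi>) - complex_of_real (\<eta> - \<xi>) * (\<i> * complex_of_real x * cis (x * \<xi>)))"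
    have eq: "fourier g \<eta> - fourier g \<xi> - (\<eta> - \<xi>) *\<^sub>R D = integral\<^sup>L lborel ?h"
    proof -
      have "integral\<^sup>L lborel ?h = integral\<^sup>L lborel (\<lambda>x. (g x * cis (x * \<eta>) - g x * cis (x * \<xi>))
              - complex_of_real (\<eta> - \<xi>) * (\<i> * complex_of_real x * g x * cis (x * \<xi>)))"
        by (rule Bochner_Integration.integral_cong) (simp_all add: algebra_simps)
      also have "\<dots> = (fourier g \<eta> - fourier g \<xi>) - complex_of_real (\<eta> - \<xi>) * D"
        unfolding fourier_def D_def
        using int_cis[OF i0, of \<eta>] int_cis[OF i0, of \<xi>] int_cis[OF i1', of \<xi>]
        by (simp add: Bochner_Integration.integral_diff integrable_mult_right)
      finally show ?thesis by (simp add: scaleR_conv_of_real)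
    qed
    have hb: "norm (?h x) \<le> (\<eta> - \<xi>)^2 / 2 * norm (complex_of_real (x^2) * g x)" for x
    proof -
      have "norm (?h x) = norm (g x) * norm (cis (x * \<eta>) - cis (x * \<xi>) - complex_of_real (\<eta> - \<xi>) * (\<i> * complex_of_real x * cis (x * \<xi>)))"
        by (simp add: norm_mult)
      also have "\<dots> \<le> norm (g x) * ((x * (\<eta> - \<xi>))^2 / 2)"
        by (intro mult_left_mono cis_expand_bound) simp
      also have "\<dots> = (\<eta> - \<xi>)^2 / 2 * norm (complex_of_real (x^2) * g x)"
        by (simp add: norm_mult power_mult_distrib norm_power)
      finally show ?thesis .
    qed
    have ih: "integrable lborel ?h"
    proof (rule Bochner_Integration.integrable_bound[of _ "\<lambda>x. (\<eta> - \<xi>)^2 / 2 * norm (complex_of_real (x^2) * g x)"])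
      show "integrable lborel (\<lambda>x. (\<eta> - \<xi>)^2 / 2 * norm (complex_of_real (x^2) * g x))"
        using i2 by (intro integrable_mult_right integrable_norm)
      have "g \<in> borel_measurable lborel" using i0 by (rule borel_measurable_integrable)
      then show "?h \<in> borel_measurable lborel"
        by (intro borel_measurable_times borel_measurable_diff cis_meas borel_measurable_const) (auto intro!: cont_meas continuous_intros)
      show "AE x in lborel. norm (?h x) \<le> norm ((\<eta> - \<xi>)^2 / 2 * norm (complex_of_real (x^2) * g x))"
        using hb by (simp add: abs_mult)
    qed
    have "norm (integral\<^sup>L lborel ?h) \<le> integral\<^sup>L lborel (\<lambda>x. norm (?h x))" by (rule integral_norm_bound)
    also have "\<dots> \<le> integral\<^sup>L lborel (\<lambda>x. (\<eta> - \<xi>)^2 / 2 * norm (complex_of_real (x^2) * g x))"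
      using ih i2 hb by (intro integral_mono integrable_norm integrable_mult_right) auto
    also have "\<dots> = (\<eta> - \<xi>)^2 / 2 * K" unfolding K_def by simp
    finally show ?thesis using eq by simp
  qed
  have K0: "K \<ge> 0" unfolding K_def by simp
  have lim: "((\<lambda>y. norm (fourier g y - fourier g \<xi> - (y - \<xi>) *\<^sub>R D) / norm (y - \<xi>)) \<longlongrightarrow> 0) (at \<xi>)"
  proof (rule Lim_null_comparison)
    show "\<forall>\<^sub>F y in at \<xi>. norm (norm (fourier g y - fourier g \<xi> - (y - \<xi>) *\<^sub>R D) / norm (y - \<xi>)) \<le> \<bar>y - \<xi>\<bar> / 2 * K"
    proof (rule always_eventually, rule allI)
      fix y
      show "norm (norm (fourier g y - fourier g \<xi> - (y - \<xi>) *\<^sub>R D) / norm (y - \<xi>)) \<le> \<bar>y - \<xi>\<bar> / 2 * K"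
      proof (cases "y = \<xi>")
        case True then show ?thesis by simp
      next
        case False
        then have p: "\<bar>y - \<xi>\<bar> > 0" by simp
        have "norm (fourier g y - fourier g \<xi> - (y - \<xi>) *\<^sub>R D) \<le> (y - \<xi>)^2 / 2 * K" by (rule key)
        also have "\<dots> = \<bar>y - \<xi>\<bar> * (\<bar>y - \<xi>\<bar> / 2 * K)" by (simp add: power2_eq_square abs_mult_self_eq)
        finally show ?thesis using p by (simp add: divide_le_eq mult.commute)
      qed
    qed
    have "((\<lambda>y. \<bar>y - \<xi>\<bar> / 2 * K) \<longlongrightarrow> \<bar>\<xi> - \<xi>\<bar> / 2 * K) (at \<xi>)"
      by (intro tendsto_intros) auto
    then show "((\<lambda>y. \<bar>y - \<xi>\<bar> / 2 * K) \<longlongrightarrow> 0) (at \<xi>)" by simp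
  qed
  show ?thesis
    unfolding has_vector_derivative_def has_derivative_iff_norm D_def[symmetric]
    using lim by (simp add: bounded_linear_scaleR_left)
qed

lemma cis_deriv: "((\<lambda>x. cis (x * \<xi>)) has_vector_derivative (\<i> * complex_of_real \<xi> * cis (x * \<xi>))) (at x)"
proof -
  have "((\<lambda>z. exp (\<i> * complex_of_real \<xi> * z)) has_field_derivative
          (\<i> * complex_of_real \<xi> * exp (\<i> * complex_of_real \<xi> * complex_of_real x))) (at (complex_of_real x))"
    by (auto intro!: derivative_eq_intros)
  then have "((\<lambda>x. exp (\<i> * complex_of_real \<xi> * complex_of_real x)) has_vector_derivative
          (\<i> * complex_of_real \<xi> * exp (\<i> * complex_of_real \<xi> * complex_of_real x))) (at x within UNIV)"
    by (rule has_vector_derivative_real_field)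
  then show ?thesis by (simp add: cis_conv_exp mult.commute mult.left_commute)
qed

lemma fourier_ibp:
  assumes d: "\<And>x. (g has_vector_derivative g' x) (at x)"
    and gc': "continuous_on UNIV g'"
    and ig: "integrable lborel g" and ig': "integrable lborel g'"
    and lt: "(g \<longlongrightarrow> 0) at_top" and lb: "(g \<longlongrightarrow> 0) at_bot"
  shows "fourier g' \<xi> = - (\<i> * complex_of_real \<xi>) * fourier g \<xi>"
proof -
  define \<phi> where "\<phi> x = g x * cis (x * \<xi>)" for x
  define \<phi>' where "\<phi>' x = g x * (\<i> * complex_of_real \<xi> * cis (x * \<xi>)) + g' x * cis (x * \<xi>)" for x
  have dphi: "(\<phi> has_vector_derivative \<phi>' x) (at x)" for x
    unfolding \<phi>_def \<phi>'_def by (rule has_vector_derivative_mult[OF d cis_deriv])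
  have gcont: "isCont g x" for x using d[of x] by (rule has_vector_derivative_continuous)
  have cphi': "isCont \<phi>' x" for x
  proof -
    have "isCont g' x" using gc' by (simp add: continuous_on_eq_continuous_at)
    moreover have "isCont (\<lambda>x. cis (x * \<xi>)) x" by (rule has_vector_derivative_continuous[OF cis_deriv])
    ultimately show ?thesis unfolding \<phi>'_def using gcont[of x] by (intro continuous_intros) auto
  qed
  have i1: "integrable lborel (\<lambda>x. \<i> * complex_of_real \<xi> * (g x * cis (x * \<xi>)))"
    using int_cis[OF ig] by (rule integrable_mult_right)
  have i2: "integrable lborel (\<lambda>x. g' x * cis (x * \<xi>))" using int_cis[OF ig'] .
  have iphi': "integrable lborel \<phi>'"
  proof -
    have "integrable lborel (\<lambda>x. \<i> * complex_of_real \<xi> * (g x * cis (x * \<xi>)) + g' x * cis (x * \<xi>))"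
      using i1 i2 by (rule Bochner_Integration.integrable_add)
    then show ?thesis unfolding \<phi>'_def by (simp add: algebra_simps)
  qed
  have nphi: "norm (\<phi> x) = norm (g x)" for x unfolding \<phi>_def by (simp add: norm_mult)
  have lt': "(\<phi> \<longlongrightarrow> 0) at_top"
    by (rule Lim_null_comparison[where g="\<lambda>x. norm (g x)"]) (auto simp: nphi tendsto_norm_zero lt)
  have lb': "(\<phi> \<longlongrightarrow> 0) at_bot"
    by (rule Lim_null_comparison[where g="\<lambda>x. norm (g x)"]) (auto simp: nphi tendsto_norm_zero lb)
  have "(LBINT x=-\<infinity>..\<infinity>. \<phi>' x) = 0 - 0"
  proof (rule interval_integral_FTC_integrable[where F=\<phi>])
    show "- \<infinity> < (\<infinity>::ereal)" by simp
    show "(\<phi> has_vector_derivative \<phi>' x) (at x)" for x by (rule dphi)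
    show "isCont \<phi>' x" for x by (rule cphi')
    show "set_integrable lborel (einterval (- \<infinity>) \<infinity>) \<phi>'"
      using iphi' by (simp add: set_integrable_def einterval_eq_UNIV)
    show "((\<phi> \<circ> real_of_ereal) \<longlongrightarrow> 0) (at_right (- \<infinity>))"
      using lb' by (simp add: ereal_tendsto_simps1)
    show "((\<phi> \<circ> real_of_ereal) \<longlongrightarrow> 0) (at_left \<infinity>)"
      using lt' by (simp add: ereal_tendsto_simps1)
  qed
  then have "integral\<^sup>L lborel \<phi>' = 0"
    by (simp add: interval_lebesgue_integral_def set_lebesgue_integral_def einterval_eq_UNIV)
  moreover have "integral\<^sup>L lborel \<phi>' = \<i> * complex_of_real \<xi> * fourier g \<xi> + fourier g' \<xi>"
  proof -
    have "integral\<^sup>L lborel \<phi>' = integral\<^sup>L lborel (\<lambda>x. \<i> * complex_of_real \<xi> * (g x * cis (x * \<xi>)) + g' x * cis (x * \<xi>))"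
      unfolding \<phi>'_def by (rule Bochner_Integration.integral_cong) (simp_all add: algebra_simps)
    also have "\<dots> = \<i> * complex_of_real \<xi> * fourier g \<xi> + fourier g' \<xi>"
      unfolding fourier_def using i1 i2 by simp
    finally show ?thesis .
  qed
  ultimately show ?thesis by (simp add: algebra_simps eq_neg_iff_add_eq_0)
qed

section \<open>Sequence lemmas\<close>

lemma ws_pos: "weight_sequence M \<Longrightarrow> M p > 0"
  unfolding weight_sequence_def by auto

lemma quot_pos: "weight_sequence M \<Longrightarrow> quot_seq M p > 0"
  unfolding quot_seq_def using ws_pos by (metis divide_pos_pos)

lemma quot_mono1:
  assumes M: "weight_sequence M"
  shows "quot_seq M p \<le> quot_seq M (Suc p)"
proof -
  have lc: "(M (Suc p))^2 \<le> M p * M (Suc (Suc p))"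
    using M unfolding weight_sequence_def by (metis One_nat_def Suc_eq_plus1 diff_Suc_1 le_add2)
  have p0: "M p > 0" "M (Suc p) > 0" using ws_pos[OF M] by auto
  show ?thesis unfolding quot_seq_def using lc p0
    by (simp add: divide_simps power2_eq_square mult.commute)
qed

lemma quot_mono:
  assumes M: "weight_sequence M" and "p \<le> q"
  shows "quot_seq M p \<le> quot_seq M q"
  using assms(2)
proof (induction q)
  case 0 then show ?case by simp
next
  case (Suc q)
  show ?case
  proof (cases "p = Suc q")
    case True then show ?thesis by simp
  next
    case False
    then have "p \<le> q" using Suc.prems by simp
    then show ?thesis using Suc.IH quot_mono1[OF M, of q] by linarith
  qed
qed

definition Lc :: "(nat \<Rightarrow> real) \<Rightarrow> real" where "Lc M = max 1 (1 / M 1)"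

lemma M_step:
  assumes M: "weight_sequence M"
  shows "M k \<le> Lc M * M (Suc k)"
proof -
  have m0: "quot_seq M 0 = M 1" unfolding quot_seq_def using M unfolding weight_sequence_def by simp
  have mk: "quot_seq M k \<ge> M 1" using quot_mono[OF M, of 0 k] m0 by simp
  have pos: "M 1 > 0" "M k > 0" "M (Suc k) > 0" using ws_pos[OF M] by auto
  have "M (Suc k) = quot_seq M k * M k" unfolding quot_seq_def using pos by simp
  then have "M k = M (Suc k) / quot_seq M k" using quot_pos[OF M, of k] by simp
  also have "\<dots> \<le> M (Suc k) / M 1" using pos mk by (intro divide_left_mono) auto
  also have "\<dots> = (1 / M 1) * M (Suc k)" by simp
  also have "\<dots> \<le> Lc M * M (Suc k)" unfolding Lc_def using pos by (intro mult_right_mono) auto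
  finally show ?thesis .
qed

lemma Lc_ge1: "Lc M \<ge> 1" unfolding Lc_def by simp

lemma M_shift:
  assumes M: "weight_sequence M"
  shows "M k \<le> Lc M ^ j * M (k + j)"
proof (induction j)
  case 0 then show ?case by simp
next
  case (Suc j)
  have "M k \<le> Lc M ^ j * M (k + j)" by (rule Suc.IH)
  also have "\<dots> \<le> Lc M ^ j * (Lc M * M (Suc (k + j)))"
    using M_step[OF M, of "k + j"] Lc_ge1[of M] by (intro mult_left_mono) auto
  finally show ?case by (simp add: algebra_simps)
qed

lemma A_shift:
  assumes A_pos: "\<forall>p. A p > 0"
    and A_cond: "almost_increasing A \<or>
                 (liminf (\<lambda>p. ereal (root p (A p))) > 0 \<and> cond_alg (hat_seq A))"
  shows "\<exists>\<gamma>>0. \<exists>\<beta>\<ge>1. \<forall>p j. j \<le> p \<longrightarrow> A (p - j) \<le> \<gamma> * \<beta>^p * A p"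
proof (cases "almost_increasing A")
  case True
  then obtain a where a: "a > 0" "\<forall>p q. p \<le> q \<longrightarrow> A p \<le> a * A q" unfolding almost_increasing_def by auto
  show ?thesis by (rule exI[of _ a], rule conjI[OF a(1)], rule exI[of _ 1]) (use a in auto)
next
  case False
  then have lim: "liminf (\<lambda>p. ereal (root p (A p))) > 0" and alg: "cond_alg (hat_seq A)" using A_cond by auto
  obtain z where z: "0 < ereal z" "ereal z < liminf (\<lambda>p. ereal (root p (A p)))"
    using ereal_dense2[OF lim] by blast
  have z0: "z > 0" using z(1) by simp
  have "eventually (\<lambda>p. ereal z < ereal (root p (A p))) sequentially"
    by (rule less_LiminfD[OF z(2)])
  then obtain J where J: "\<And>p. p \<ge> J \<Longrightarrow> z < root p (A p)" unfolding eventually_sequentially by auto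
  define r where "r = min z 1"
  have r: "r > 0" "r \<le> 1" "r \<le> z" unfolding r_def using z0 by auto
  define c where "c = min 1 (Min (A ` {..J}))"
  have c: "c > 0" "c \<le> 1" unfolding c_def using A_pos by auto
  have Ac: "A j \<ge> c * r^j" for j
  proof (cases "j \<le> J")
    case True
    have "c \<le> A j" unfolding c_def using True by (simp add: min.coboundedI2)
    moreover have "c * r^j \<le> c" using c r by (simp add: mult_left_le power_le_one)
    ultimately show ?thesis by linarith
  next
    case False
    then have jJ: "j \<ge> J" "j > 0" by auto
    have "z < root j (A j)" using J jJ by simp
    then have "z^j < root j (A j) ^ j" using z0 jJ by (intro power_strict_mono) auto
    also have "\<dots> = A j" using jJ A_pos by (simp add: real_root_pow_pos)
    finally have "z^j < A j" .
    moreover have "r^j \<le> z^j" using r by (intro power_mono) auto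
    moreover have "c * r^j \<le> r^j" using c r by (simp add: mult_left_le)
    ultimately show ?thesis by linarith
  qed
  obtain C1 where C1: "C1 \<ge> 1" "\<forall>p q. hat_seq A p * hat_seq A q \<le> C1 ^ (p + q) * hat_seq A (p + q)"
    using alg unfolding cond_alg_def by auto
  define \<beta> where "\<beta> = 2 * C1 / r"
  have \<beta>: "\<beta> \<ge> 1" unfolding \<beta>_def using C1 r by (simp add: field_simps)
  have main: "A (p - j) \<le> 1/c * \<beta>^p * A p" if jp: "j \<le> p" for p j
  proof -
    have h: "hat_seq A (p - j) * hat_seq A j \<le> C1 ^ p * hat_seq A p"
      using C1(2)[rule_format, of "p - j" j] jp by simp
    have fpos: "fact (p - j) * fact j > (0::real)" by simp
    have Apos: "A j > 0" "A p > 0" "A (p - j) > 0" using A_pos by auto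
    have "A (p - j) * (fact (p - j) * fact j * A j) \<le> C1 ^ p * fact p * A p"
      using h unfolding hat_seq_def by (simp add: algebra_simps)
    moreover have "fact p = (p choose j) * (fact (p - j) * fact j :: real)"
      using binomial_fact_lemma[OF jp] by (metis (mono_tags, lifting) mult.commute of_nat_fact of_nat_mult)
    ultimately have "A (p - j) * (fact (p - j) * fact j * A j) \<le> C1 ^ p * ((p choose j) * (fact (p - j) * fact j)) * A p"
      by simp
    then have "A (p - j) * A j \<le> C1 ^ p * (p choose j) * A p"
      using fpos by (simp add: algebra_simps mult_le_cancel_left_pos)
    also have "\<dots> \<le> C1 ^ p * 2^p * A p"
    proof -
      have "real (p choose j) \<le> 2^p" using binomial_le_pow2[of p j] by (metis of_nat_le_iff of_nat_numeral of_nat_power)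
      then show ?thesis using C1 Apos by (intro mult_right_mono mult_left_mono) auto
    qed
    finally have "A (p - j) * A j \<le> (2 * C1)^p * A p" by (simp add: power_mult_distrib mult.commute)
    then have "A (p - j) * (c * r^j) \<le> (2 * C1)^p * A p"
      using Ac[of j] Apos by (smt (verit) mult_left_mono)
    then have "A (p - j) \<le> (2 * C1)^p * A p / (c * r^j)" using c r by (simp add: field_simps)
    also have "\<dots> = (1/c) * ((2 * C1)^p / r^j) * A p" by simp
    also have "\<dots> \<le> (1/c) * \<beta>^p * A p"
    proof -
      have "(2 * C1)^p / r^j \<le> (2 * C1)^p / r^p"
        using r jp C1 by (intro divide_left_mono power_decreasing) auto
      also have "\<dots> = \<beta>^p" unfolding \<beta>_def by (simp add: power_divide)
      finally show ?thesis using c Apos by (intro mult_right_mono mult_left_mono) auto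
    qed
    finally show "A (p - j) \<le> 1/c * \<beta>^p * A p" .
  qed
  have "1/c > 0" using c by simp
  then show ?thesis using main \<beta> by blast
qed

definition Gf :: "(real \<Rightarrow> complex) \<Rightarrow> nat \<Rightarrow> nat \<Rightarrow> real \<Rightarrow> complex" where
  "Gf f k s x = complex_of_real (x^k) * vder f s x"

lemma norm_Gf_Suc: "norm (Gf f (Suc k) s x) = \<bar>x\<bar> * norm (Gf f k s x)"
  unfolding Gf_def by (simp add: norm_mult abs_mult)

lemma norm_Gf_SS: "norm (Gf f (Suc (Suc k)) s x) = x^2 * norm (Gf f k s x)"
  unfolding norm_Gf_Suc by (simp add: power2_eq_square abs_mult_self_eq)

lemma Gf_cont: "smooth_fun f \<Longrightarrow> continuous_on UNIV (Gf f k s)"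
  unfolding Gf_def using vder_cont[of f s] by (intro continuous_intros) auto

lemma Gf_bound:
  assumes f: "f \<in> S_space M B h" and pos: "\<forall>p. M p > 0" "\<forall>q. B q > 0" "h > 0"
  shows "norm (Gf f k s x) \<le> S_norm M B h f * (h^(k+s) * M k * B s)"
  unfolding Gf_def using S_bound[OF f] pos by auto

lemma Gf_int:
  assumes f: "f \<in> S_space M B h" and M: "weight_sequence M" and pos: "\<forall>q. B q > 0" "h > 0"
    and sm: "\<And>p. ln (quot_seq M (p + 1) / quot_seq M p) \<le> C0 * H ^ (p + 1)"
  shows "integrable lborel (Gf f k s)"
    and "integral\<^sup>L lborel (\<lambda>x. norm (Gf f k s x)) \<le>
           S_norm M B h f * (h^(k+s+1) * M (k+1) * B s) * (4*pi + 2 * (C0 * H^(k+1)))"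
proof -
  have Mp: "\<forall>p. M p > 0" using ws_pos[OF M] by auto
  define NF where "NF = S_norm M B h f"
  have NF: "NF \<ge> 0" unfolding NF_def using S_norm_nonneg[OF f] Mp pos by auto
  define m0 where "m0 = quot_seq M k"
  define m1 where "m1 = quot_seq M (Suc k)"
  have m: "m0 > 0" "m1 > 0" "m0 \<le> m1" unfolding m0_def m1_def using quot_pos[OF M] quot_mono1[OF M] by auto
  define b0 where "b0 = h^(k+s) * M k * B s"
  have Mk: "M k > 0" "M (Suc k) > 0" "M (Suc (Suc k)) > 0" using Mp by auto
  have e1: "h^(k+1+s) * M (k+1) * B s = b0 * (h * m0)"
    unfolding b0_def m0_def quot_seq_def using Mk by (simp add: field_simps power_add)
  have e2: "h^(k+2+s) * M (k+2) * B s = b0 * (h * m0) * (h * m1)"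
    unfolding b0_def m0_def m1_def quot_seq_def using Mk by (simp add: field_simps power_add numeral_2_eq_2)
  have b0: "b0 > 0" unfolding b0_def using Mp pos by simp
  have g0: "norm (Gf f k s x) \<le> NF * b0" for x unfolding NF_def b0_def by (rule Gf_bound[OF f Mp pos])
  have g1: "\<bar>x\<bar> * norm (Gf f k s x) \<le> NF * (b0 * (h * m0))" for x
    using Gf_bound[OF f Mp pos, of "Suc k" s x] unfolding norm_Gf_Suc NF_def e1[symmetric] by simp
  have g2: "x^2 * norm (Gf f k s x) \<le> NF * (b0 * (h * m0) * (h * m1))" for x
    using Gf_bound[OF f Mp pos, of "Suc (Suc k)" s x] unfolding norm_Gf_SS NF_def e2[symmetric]
    by (simp add: numeral_2_eq_2)
  have "continuous_on UNIV (Gf f k s)" using f unfolding S_space_def by (auto intro!: Gf_cont)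
  then have meas: "Gf f k s \<in> borel_measurable lborel" by (rule cont_meas)
  have bb: "b0 * (h * m0) / b0 \<le> b0 * (h * m0) * (h * m1) / (b0 * (h * m0))"
    using b0 m pos by simp
  note MI = majorant_int[OF meas b0 _ _ bb NF g0 g1 g2]
  have pp: "b0 * (h * m0) > 0" "b0 * (h * m0) * (h * m1) > 0" using b0 m pos by auto
  show "integrable lborel (Gf f k s)" using MI(1)[OF pp] .
  have "integral\<^sup>L lborel (\<lambda>x. norm (Gf f k s x)) \<le> NF * (b0 * (h * m0)) *
      (4 * pi + 2 * ln (b0 * (h * m0) * (h * m1) * b0 / (b0 * (h * m0))\<^sup>2))"
    using MI(2)[OF pp] .
  also have "b0 * (h * m0) * (h * m1) * b0 / (b0 * (h * m0))\<^sup>2 = m1 / m0"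
    using b0 m pos by (simp add: field_simps power2_eq_square)
  also have "ln (m1 / m0) \<le> C0 * H^(k+1)" unfolding m0_def m1_def using sm[of k] by simp
  then have "NF * (b0 * (h * m0)) * (4 * pi + 2 * ln (m1 / m0)) \<le> NF * (b0 * (h * m0)) * (4*pi + 2 * (C0 * H^(k+1)))"
    using NF b0 m pos by (intro mult_left_mono) auto
  finally have calc: "integral\<^sup>L lborel (\<lambda>x. norm (Gf f k s x)) \<le> NF * (b0 * (h * m0)) * (4*pi + 2 * (C0 * H^(k+1)))" .
  have e1': "b0 * (h * m0) = h^(k+s+1) * M (k+1) * B s" using e1[symmetric] by (simp add: add.commute add.left_commute)
  show "integral\<^sup>L lborel (\<lambda>x. norm (Gf f k s x)) \<le>
           S_norm M B h f * (h^(k+s+1) * M (k+1) * B s) * (4*pi + 2 * (C0 * H^(k+1)))"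
    using calc unfolding NF_def e1' .
qed

lemma Gf_deriv:
  assumes "smooth_fun f"
  shows "(Gf f k s has_vector_derivative (of_nat k * Gf f (k - 1) s x + Gf f k (Suc s) x)) (at x)"
proof -
  have d: "((\<lambda>x. complex_of_real (x^k) * vder f s x) has_vector_derivative
      (complex_of_real (x^k) * vder f (Suc s) x + complex_of_real (real k * x^(k - Suc 0)) * vder f s x)) (at x)"
    by (intro has_vector_derivative_mult has_vector_derivative_of_real DERIV_pow vder_deriv assms)
  have "((\<lambda>x. complex_of_real (x^k) * vder f s x) has_vector_derivative
       (of_nat k * Gf f (k - 1) s x + Gf f k (Suc s) x)) (at x)"
    by (rule has_vector_derivative_eq_rhs[OF d]) (simp add: Gf_def algebra_simps)
  then show ?thesis unfolding Gf_def[abs_def] .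
qed

lemma Gf_lim:
  assumes f: "f \<in> S_space M B h" and pos: "\<forall>p. M p > 0" "\<forall>q. B q > 0" "h > 0"
  shows "(Gf f k s \<longlongrightarrow> 0) at_top" "(Gf f k s \<longlongrightarrow> 0) at_bot"
proof -
  define c where "c = S_norm M B h f * (h^(Suc k+s) * M (Suc k) * B s)"
  have b: "norm (Gf f k s x) \<le> c * norm (inverse x)" if "x \<noteq> 0" for x
  proof -
    have "\<bar>x\<bar> * norm (Gf f k s x) \<le> c" unfolding c_def norm_Gf_Suc[symmetric] by (rule Gf_bound[OF f pos])
    then show ?thesis using that by (simp add: field_simps)
  qed
  have l: "((\<lambda>x::real. c * norm (inverse x)) \<longlongrightarrow> 0) at_infinity"
    by (rule tendsto_mult_right_zero[OF tendsto_norm_zero[OF tendsto_inverse_0]])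
  show "(Gf f k s \<longlongrightarrow> 0) at_top"
  proof (rule Lim_null_comparison[OF _ tendsto_mono[OF at_top_le_at_infinity l]])
    show "\<forall>\<^sub>F x in at_top. norm (Gf f k s x) \<le> c * norm (inverse x)"
      using eventually_gt_at_top[of 0] by eventually_elim (rule b, simp)
  qed
  show "(Gf f k s \<longlongrightarrow> 0) at_bot"
  proof (rule Lim_null_comparison[OF _ tendsto_mono[OF at_bot_le_at_infinity l]])
    show "\<forall>\<^sub>F x in at_bot. norm (Gf f k s x) \<le> c * norm (inverse x)"
      using eventually_at_bot_not_equal[of 0] by eventually_elim (rule b, simp)
  qed
qed

lemma Gf_rec:
  assumes f: "f \<in> S_space M B h" and M: "weight_sequence M" and pos: "\<forall>q. B q > 0" "h > 0"
    and sm: "\<And>p. ln (quot_seq M (p + 1) / quot_seq M p) \<le> C0 * H ^ (p + 1)"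
  shows "\<bar>\<xi>\<bar> * norm (fourier (Gf f k s) \<xi>) \<le>
          real k * norm (fourier (Gf f (k - 1) s) \<xi>) + norm (fourier (Gf f k (Suc s)) \<xi>)"
proof -
  have Mp: "\<forall>p. M p > 0" using ws_pos[OF M] by auto
  have sf: "smooth_fun f" using f unfolding S_space_def by auto
  note I = Gf_int(1)[OF f M pos sm]
  have ig': "integrable lborel (\<lambda>x. of_nat k * Gf f (k - 1) s x + Gf f k (Suc s) x)"
    using I by (intro Bochner_Integration.integrable_add integrable_mult_right)
  have c': "continuous_on UNIV (\<lambda>x. of_nat k * Gf f (k - 1) s x + Gf f k (Suc s) x)"
    using Gf_cont[OF sf] by (intro continuous_intros) auto
  have "fourier (\<lambda>x. of_nat k * Gf f (k - 1) s x + Gf f k (Suc s) x) \<xi> = - (\<i> * complex_of_real \<xi>) * fourier (Gf f k s) \<xi>"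
    by (rule fourier_ibp[OF Gf_deriv[OF sf] c' I ig' Gf_lim[OF f Mp pos]])
  moreover have "fourier (\<lambda>x. of_nat k * Gf f (k - 1) s x + Gf f k (Suc s) x) \<xi> =
      of_nat k * fourier (Gf f (k - 1) s) \<xi> + fourier (Gf f k (Suc s)) \<xi>"
    using I by (simp add: fourier_add integrable_mult_right fourier_cmult)
  ultimately have "\<bar>\<xi>\<bar> * norm (fourier (Gf f k s) \<xi>) = norm (of_nat k * fourier (Gf f (k - 1) s) \<xi> + fourier (Gf f k (Suc s)) \<xi>)"
    by (metis norm_minus_cancel norm_mult norm_ii norm_of_real mult_1)
  also have "\<dots> \<le> norm (of_nat k * fourier (Gf f (k - 1) s) \<xi>) + norm (fourier (Gf f k (Suc s)) \<xi>)"
    by (rule norm_triangle_ineq)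
  finally show ?thesis by (simp add: norm_mult)
qed

lemma rec_sum:
  fixes Fn T :: "nat \<Rightarrow> nat \<Rightarrow> real" and y :: real
  assumes y: "y \<ge> 0"
    and rec: "\<And>k s. y * Fn k s \<le> real k * Fn (k - 1) s + Fn k (Suc s)"
    and base: "\<And>k s. Fn k s \<le> T k s"
  shows "y^p * Fn q r \<le> (\<Sum>j\<le>p. real (p choose j) * (real (q choose j) * fact j) * T (q - j) (r + p - j))"
proof (induction p arbitrary: q r)
  case 0
  then show ?case using base by simp
next
  case (Suc p)
  define X where "X i = real (q choose i) * fact i * T (q - i) (r + Suc p - i)" for i
  have "y^(Suc p) * Fn q r = y^p * (y * Fn q r)" by simp
  also have "\<dots> \<le> y^p * (real q * Fn (q - 1) r + Fn q (Suc r))"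
    using rec y by (intro mult_left_mono) auto
  also have "\<dots> = real q * (y^p * Fn (q - 1) r) + y^p * Fn q (Suc r)" by (simp add: algebra_simps)
  also have "\<dots> \<le> real q * (\<Sum>j\<le>p. real (p choose j) * (real (q - 1 choose j) * fact j) * T (q - 1 - j) (r + p - j))
      + (\<Sum>j\<le>p. real (p choose j) * (real (q choose j) * fact j) * T (q - j) (Suc r + p - j))"
    using Suc.IH[of "q - 1" r] Suc.IH[of q "Suc r"] by (intro add_mono mult_left_mono) auto
  also have "\<dots> = (\<Sum>j\<le>p. real (p choose j) * X (Suc j)) + (\<Sum>j\<le>p. real (p choose j) * X j)"
  proof -
    have a: "real q * (\<Sum>j\<le>p. real (p choose j) * (real (q - 1 choose j) * fact j) * T (q - 1 - j) (r + p - j))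
        = (\<Sum>j\<le>p. real (p choose j) * X (Suc j))"
      unfolding sum_distrib_left
    proof (rule sum.cong[OF refl])
      fix j assume "j \<in> {..p}"
      have cq: "real q * real (q - 1 choose j) * fact j = real (q choose Suc j) * fact (Suc j)"
      proof (cases q)
        case 0 then show ?thesis by simp
      next
        case (Suc n)
        have eq: "real (Suc n) * real (n choose j) = real (Suc n choose Suc j) * real (Suc j)"
          by (simp only: of_nat_mult[symmetric] Suc_times_binomial_eq)
        have "real q * real (q - 1 choose j) * fact j = (real (Suc n) * real (n choose j)) * fact j"
          using Suc by simp
        also have "\<dots> = (real (Suc n choose Suc j) * real (Suc j)) * fact j" by (simp only: eq)
        also have "\<dots> = real (q choose Suc j) * fact (Suc j)"
          using Suc by (simp del: binomial_Suc_Suc of_nat_Suc add: fact_Suc algebra_simps)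
        finally show ?thesis .
      qed
      have "r + p - j = r + Suc p - Suc j" by simp
      moreover have "q - 1 - j = q - Suc j" by simp
      ultimately show "real q * (real (p choose j) * (real (q - 1 choose j) * fact j) * T (q - 1 - j) (r + p - j))
          = real (p choose j) * X (Suc j)"
        unfolding X_def cq[symmetric] by (simp add: ac_simps)
    qed
    have b: "(\<Sum>j\<le>p. real (p choose j) * (real (q choose j) * fact j) * T (q - j) (Suc r + p - j))
        = (\<Sum>j\<le>p. real (p choose j) * X j)"
      unfolding X_def by (intro sum.cong) (simp_all add: algebra_simps)
    show ?thesis using a b by simp
  qed
  also have "\<dots> = (\<Sum>j\<le>Suc p. real (Suc p choose j) * X j)"
  proof -
    have "(\<Sum>j\<le>Suc p. real (Suc p choose j) * X j) = X 0 + (\<Sum>j\<le>p. real (Suc p choose Suc j) * X (Suc j))"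
      by (subst sum.atMost_Suc_shift) simp
    also have "\<dots> = X 0 + (\<Sum>j\<le>p. real (p choose j) * X (Suc j)) + (\<Sum>j\<le>p. real (p choose Suc j) * X (Suc j))"
      by (simp add: sum.distrib algebra_simps)
    finally have s1: "(\<Sum>j\<le>Suc p. real (Suc p choose j) * X j) = X 0 + (\<Sum>j\<le>p. real (p choose j) * X (Suc j)) + (\<Sum>j\<le>p. real (p choose Suc j) * X (Suc j))" .
    have "(\<Sum>j\<le>p. real (p choose j) * X j) = (\<Sum>j\<le>Suc p. real (p choose j) * X j)"
      by simp
    also have "\<dots> = X 0 + (\<Sum>j\<le>p. real (p choose Suc j) * X (Suc j))"
      by (subst sum.atMost_Suc_shift) simp
    finally have s2: "(\<Sum>j\<le>p. real (p choose j) * X j) = X 0 + (\<Sum>j\<le>p. real (p choose Suc j) * X (Suc j))" .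
    show ?thesis using s1 s2 by simp
  qed
  also have "\<dots> = (\<Sum>j\<le>Suc p. real (Suc p choose j) * (real (q choose j) * fact j) * T (q - j) (r + Suc p - j))"
    unfolding X_def by (simp add: algebra_simps)
  finally show ?case .
qed

lemma Gf_00: "Gf f 0 0 = f"
  unfolding Gf_def by auto

lemma pow_f_eq: "(\<lambda>x. (\<i> * complex_of_real x)^k * f x) = (\<lambda>x. \<i>^k * Gf f k 0 x)"
  unfolding Gf_def by (auto simp: power_mult_distrib)

lemma vder_fourier:
  assumes f: "f \<in> S_space M B h" and M: "weight_sequence M" and pos: "\<forall>q. B q > 0" "h > 0"
    and sm: "\<And>p. ln (quot_seq M (p + 1) / quot_seq M p) \<le> C0 * H ^ (p + 1)"
  shows "vder (fourier f) q = fourier (\<lambda>x. (\<i> * complex_of_real x)^q * f x)"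
    and "smooth_fun (fourier f)"
proof -
  note I = Gf_int(1)[OF f M pos sm]
  have d: "(fourier (\<lambda>x. (\<i> * complex_of_real x)^k * f x) has_vector_derivative
            fourier (\<lambda>x. (\<i> * complex_of_real x)^(Suc k) * f x) \<xi>) (at \<xi>)" for k \<xi>
  proof -
    have i0: "integrable lborel (\<lambda>x. (\<i> * complex_of_real x)^k * f x)"
      unfolding pow_f_eq using I by (rule integrable_mult_right)
    have e1: "(\<lambda>x. complex_of_real x * ((\<i> * complex_of_real x)^k * f x)) = (\<lambda>x. \<i>^k * Gf f (Suc k) 0 x)"
      unfolding Gf_def by (auto simp: power_mult_distrib)
    have e2: "(\<lambda>x. complex_of_real (x^2) * ((\<i> * complex_of_real x)^k * f x)) = (\<lambda>x. \<i>^k * Gf f (Suc (Suc k)) 0 x)"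
      unfolding Gf_def by (auto simp: power_mult_distrib power2_eq_square)
    have i1: "integrable lborel (\<lambda>x. complex_of_real x * ((\<i> * complex_of_real x)^k * f x))"
      unfolding e1 using I by (rule integrable_mult_right)
    have i2: "integrable lborel (\<lambda>x. complex_of_real (x^2) * ((\<i> * complex_of_real x)^k * f x))"
      unfolding e2 using I by (rule integrable_mult_right)
    have "(\<lambda>x. \<i> * complex_of_real x * ((\<i> * complex_of_real x)^k * f x)) = (\<lambda>x. (\<i> * complex_of_real x)^(Suc k) * f x)"
      by auto
    then show ?thesis using fourier_deriv[OF i0 i1 i2, of \<xi>] by simp
  qed
  show vf: "vder (fourier f) q = fourier (\<lambda>x. (\<i> * complex_of_real x)^q * f x)" for q
  proof (induction q)
    case 0 then show ?case by simp
  next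
    case (Suc q)
    show ?case
    proof (rule ext)
      fix \<xi>
      have "vder (fourier f) (Suc q) \<xi> = vector_derivative (fourier (\<lambda>x. (\<i> * complex_of_real x)^q * f x)) (at \<xi>)"
        using Suc.IH by simp
      also have "\<dots> = fourier (\<lambda>x. (\<i> * complex_of_real x)^(Suc q) * f x) \<xi>"
        by (rule vector_derivative_at[OF d])
      finally show "vder (fourier f) (Suc q) \<xi> = fourier (\<lambda>x. (\<i> * complex_of_real x)^(Suc q) * f x) \<xi>" .
    qed
  qed
  show "smooth_fun (fourier f)"
    unfolding smooth_fun_def vf using d by (auto intro: differentiableI_vector)
qed

lemma aux_E:
  fixes X Y C0 :: real
  assumes "0 < C0" "X \<le> Y" "1 \<le> Y"
  shows "4*pi + 2*(C0*X) \<le> (4*pi+2*C0)*Y"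
proof -
  have a: "pi*1 \<le> pi*Y" using assms(3) by (intro mult_left_mono) auto
  have b: "C0*X \<le> C0*Y" using assms by (intro mult_left_mono) auto
  have c: "(4*pi+2*C0)*Y = 4*(pi*Y) + 2*(C0*Y)" by (simp add: algebra_simps)
  show ?thesis unfolding c using a b by linarith
qed

lemma sum_final:
  fixes T :: "nat \<Rightarrow> nat \<Rightarrow> real" and A M :: "nat \<Rightarrow> real"
  assumes Tb: "\<And>k s. T k s \<le> NF * (h^(k+s+1) * M (k+1) * (fact s * A s)) * (4*pi + 2*(C0*H^(k+1)))"
    and Msh: "\<And>k j. M k \<le> L^j * M (k+j)"
    and Ash: "\<And>p j. j \<le> p \<Longrightarrow> A (p-j) \<le> \<gamma> * \<beta>^p * A p"
    and pos: "NF \<ge> 0" "h \<ge> 1" "L \<ge> 1" "\<beta> \<ge> 1" "H \<ge> 1" "C0 > 0" "\<gamma> > 0" "\<forall>p. A p > 0" "\<forall>p. M p > 0"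
  shows "(\<Sum>j\<le>p. real (p choose j) * (real (q choose j) * fact j) * T (q-j) (p-j))
          \<le> (\<gamma>*(4*pi+2*C0)*H*h*NF) * ((4*\<beta>*L*H*h)^(p+q) * (fact p * A p) * M (q+1))"
proof -
  define Cst where "Cst = \<gamma>*(4*pi+2*C0)*NF*fact p*A p*M (q+1)"
  define Z where "Z = 2^q * \<beta>^p * L^p * H^(q+1) * h^(p+q+1)"
  have Cst: "Cst \<ge> 0" unfolding Cst_def using pos by (intro mult_nonneg_nonneg) (auto intro: less_imp_le)
  have Z: "Z \<ge> 0" unfolding Z_def using pos by simp
  have tmb: "real (p choose j) * (real (q choose j) * fact j) * T (q-j) (p-j) \<le> Cst * Z" if j: "j \<le> p" for j
  proof (cases "j \<le> q")
    case False
    then have "q < j" by simp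
    then have "real (q choose j) = 0" by (simp add: binomial_eq_0)
    then show ?thesis using Cst Z by (simp only: mult_zero_left mult_zero_right) simp
  next
    case True
    define e where "e = (q - j) + (p - j) + 1"
    define E where "E = 4*pi + 2*(C0*H^((q-j)+1))"
    have E0: "E \<ge> 0" unfolding E_def using pos by simp
    have fct: "real (p choose j) * fact j * fact (p - j) = fact p"
      using binomial_fact_lemma[OF j] by (metis (mono_tags, lifting) mult.commute mult.left_commute of_nat_fact of_nat_mult)
    have "real (p choose j) * (real (q choose j) * fact j) * T (q-j) (p-j)
        \<le> real (p choose j) * (real (q choose j) * fact j) * (NF * (h^e * M ((q-j)+1) * (fact (p-j) * A (p-j))) * E)"
      unfolding e_def E_def by (intro mult_left_mono Tb) auto
    also have "\<dots> = (fact p * NF) * (real (q choose j) * h^e * M ((q-j)+1) * A (p-j) * E)"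
      using fct by (simp add: ac_simps)
    also have "\<dots> \<le> (fact p * NF) * (2^q * h^(p+q+1) * (L^p * M (q+1)) * (\<gamma> * \<beta>^p * A p) * ((4*pi+2*C0) * H^(q+1)))"
    proof (rule mult_left_mono)
      have f1: "real (q choose j) \<le> 2^q"
        using binomial_le_pow2[of q j] by (metis of_nat_le_iff of_nat_numeral of_nat_power)
      have f2: "h^e \<le> h^(p+q+1)" unfolding e_def using pos True j by (intro power_increasing) auto
      have f3: "M ((q-j)+1) \<le> L^p * M (q+1)"
      proof -
        have "M ((q-j)+1) \<le> L^j * M ((q-j)+1+j)" by (rule Msh)
        also have "(q-j)+1+j = q+1" using True by simp
        also have "L^j * M (q+1) \<le> L^p * M (q+1)" using pos j by (intro mult_right_mono power_increasing) (auto intro: less_imp_le)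
        finally show ?thesis by simp
      qed
      have f4: "A (p-j) \<le> \<gamma> * \<beta>^p * A p" by (rule Ash[OF j])
      have f5: "E \<le> (4*pi+2*C0) * H^(q+1)"
      proof -
        have h1: "H^((q-j)+1) \<le> H^(q+1)" using pos by (intro power_increasing) auto
        have h2: "1 \<le> H^(q+1)" using pos by (intro one_le_power) auto
        show ?thesis unfolding E_def using aux_E[OF _ h1 h2] pos by blast
      qed
      show "real (q choose j) * h^e * M ((q-j)+1) * A (p-j) * E
          \<le> 2^q * h^(p+q+1) * (L^p * M (q+1)) * (\<gamma> * \<beta>^p * A p) * ((4*pi+2*C0) * H^(q+1))"
        using f1 f2 f3 f4 f5 pos E0
        by (intro mult_mono) (auto intro: less_imp_le simp: zero_le_mult_iff)
      show "0 \<le> fact p * NF" using pos by simp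
    qed
    also have "\<dots> = Cst * Z" unfolding Cst_def Z_def by (simp add: ac_simps)
    finally show ?thesis .
  qed
  have "(\<Sum>j\<le>p. real (p choose j) * (real (q choose j) * fact j) * T (q-j) (p-j)) \<le> of_nat (card {..p}) * (Cst * Z)"
    by (rule sum_bounded_above) (use tmb in auto)
  also have "\<dots> = real (Suc p) * (Cst * Z)" by simp
  also have "\<dots> \<le> 2^p * (Cst * Z)"
  proof -
    have "p < 2^p" by (rule less_exp)
    then have "Suc p \<le> 2^p" by (rule Suc_leI)
    then have "real (Suc p) \<le> 2^p" by (metis of_nat_le_iff of_nat_numeral of_nat_power)
    then show ?thesis using Cst Z by (intro mult_right_mono) auto
  qed
  also have "\<dots> = Cst * (2^p * Z)" by simp
  also have "\<dots> \<le> Cst * (H * h * (4*\<beta>*L*H*h)^(p+q))"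
  proof (rule mult_left_mono[OF _ Cst])
    have "2^p * Z = H * h * ((2*\<beta>*L)^p * (2*H)^q * h^(p+q))"
      unfolding Z_def by (simp add: power_mult_distrib power_add ac_simps)
    also have "\<dots> \<le> H * h * ((4*\<beta>*L*H)^p * (4*\<beta>*L*H)^q * h^(p+q))"
    proof -
      have a1: "2*\<beta>*L \<le> 4*\<beta>*L*H"
      proof -
        have "2*\<beta>*L*1 \<le> 2*\<beta>*L*(2*H)" using pos by (intro mult_left_mono) auto
        then show ?thesis by simp
      qed
      have a2: "2*H \<le> 4*\<beta>*L*H"
      proof -
        have "1 \<le> \<beta>*L" using pos by (metis mult_mono' mult_1 zero_le_one)
        then have "2*H*1 \<le> 2*H*(2*(\<beta>*L))" using pos by (intro mult_left_mono) auto
        then show ?thesis by (simp add: ac_simps)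
      qed
      have "(2*\<beta>*L)^p \<le> (4*\<beta>*L*H)^p" using a1 pos by (intro power_mono) auto
      moreover have "(2*H)^q \<le> (4*\<beta>*L*H)^q" using a2 pos by (intro power_mono) auto
      ultimately show ?thesis using pos
        by (intro mult_left_mono mult_right_mono mult_mono) auto
    qed
    also have "\<dots> = H * h * (4*\<beta>*L*H*h)^(p+q)" by (simp add: power_mult_distrib power_add ac_simps)
    finally show "2^p * Z \<le> H * h * (4*\<beta>*L*H*h)^(p+q)" .
  qed
  also have "\<dots> = (\<gamma>*(4*pi+2*C0)*H*h*NF) * ((4*\<beta>*L*H*h)^(p+q) * (fact p * A p) * M (q+1))"
    unfolding Cst_def by (simp add: ac_simps)
  finally show ?thesis .
qed

lemma hat_pos: "\<forall>p. A p > 0 \<Longrightarrow> \<forall>q. hat_seq A q > 0"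
  unfolding hat_seq_def by auto

lemma shift_pos: "weight_sequence M \<Longrightarrow> \<forall>q. shift1 M q > 0"
  unfolding shift1_def using ws_pos by auto

lemma fourier_in:
  assumes M: "weight_sequence M" and A_pos: "\<forall>p. A p > 0"
    and C0: "C0 > 0" and H: "H \<ge> 1"
    and sm: "\<And>p. ln (quot_seq M (p + 1) / quot_seq M p) \<le> C0 * H ^ (p + 1)"
    and \<gamma>: "\<gamma> > 0" and \<beta>: "\<beta> \<ge> 1" and Ash: "\<And>p j. j \<le> p \<Longrightarrow> A (p-j) \<le> \<gamma> * \<beta>^p * A p"
    and f: "f \<in> S_space M (hat_seq A) h" and h: "h \<ge> 1"
  shows "fourier f \<in> S_space (hat_seq A) (shift1 M) ((4*\<beta>*Lc M*H) * h)"
    and "S_norm (hat_seq A) (shift1 M) ((4*\<beta>*Lc M*H) * h) (fourier f)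
           \<le> (\<gamma>*(4*pi+2*C0)*H) * h * S_norm M (hat_seq A) h f"
proof -
  have Mp: "\<forall>p. M p > 0" using ws_pos[OF M] by auto
  have hp: "\<forall>q. hat_seq A q > 0" by (rule hat_pos[OF A_pos])
  have h0: "h > 0" using h by simp
  define NF where "NF = S_norm M (hat_seq A) h f"
  have NF: "NF \<ge> 0" unfolding NF_def using S_norm_nonneg[OF f] Mp hp h0 by auto
  have L: "Lc M \<ge> 1" by (rule Lc_ge1)
  have bound: "norm (complex_of_real (\<xi>^p) * vder (fourier f) q \<xi>)
     \<le> (\<gamma>*(4*pi+2*C0)*H*h*NF) * (((4*\<beta>*Lc M*H) * h)^(p+q) * hat_seq A p * shift1 M q)" for \<xi> p q
  proof -
    define Fn where "Fn k s = norm (fourier (Gf f k s) \<xi>)" for k s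
    define T where "T k s = integral\<^sup>L lborel (\<lambda>x. norm (Gf f k s x))" for k s
    have v: "vder (fourier f) q \<xi> = \<i>^q * fourier (Gf f q 0) \<xi>"
      unfolding vder_fourier(1)[OF f M hp h0 sm] pow_f_eq fourier_cmult ..
    have "norm (complex_of_real (\<xi>^p) * vder (fourier f) q \<xi>) = \<bar>\<xi>\<bar>^p * Fn q 0"
      unfolding v Fn_def by (simp add: norm_mult norm_power)
    also have "\<dots> \<le> (\<Sum>j\<le>p. real (p choose j) * (real (q choose j) * fact j) * T (q - j) (0 + p - j))"
    proof (rule rec_sum)
      show "\<bar>\<xi>\<bar> \<ge> 0" by simp
      show "\<bar>\<xi>\<bar> * Fn k s \<le> real k * Fn (k - 1) s + Fn k (Suc s)" for k s
        unfolding Fn_def by (rule Gf_rec[OF f M hp h0 sm])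
      show "Fn k s \<le> T k s" for k s unfolding Fn_def T_def by (rule fourier_bound)
    qed
    also have "\<dots> = (\<Sum>j\<le>p. real (p choose j) * (real (q choose j) * fact j) * T (q - j) (p - j))" by simp
    also have "\<dots> \<le> (\<gamma>*(4*pi+2*C0)*H*h*NF) * ((4*\<beta>*Lc M*H*h)^(p+q) * (fact p * A p) * M (q+1))"
    proof (rule sum_final)
      show "T k s \<le> NF * (h^(k+s+1) * M (k+1) * (fact s * A s)) * (4*pi + 2*(C0*H^(k+1)))" for k s
        using Gf_int(2)[OF f M hp h0 sm, of k s] unfolding T_def NF_def hat_seq_def .
      show "M k \<le> Lc M ^ j * M (k + j)" for k j by (rule M_shift[OF M])
      show "A (p - j) \<le> \<gamma> * \<beta>^p * A p" if "j \<le> p" for p j using Ash that .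
    qed (use NF h L \<beta> H C0 \<gamma> A_pos Mp in auto)
    also have "\<dots> = (\<gamma>*(4*pi+2*C0)*H*h*NF) * (((4*\<beta>*Lc M*H) * h)^(p+q) * hat_seq A p * shift1 M q)"
      unfolding hat_seq_def shift1_def by (simp add: ac_simps)
    finally show ?thesis .
  qed
  have sm': "smooth_fun (fourier f)" by (rule vder_fourier(2)[OF f M hp h0 sm])
  have pos2: "\<forall>p. hat_seq A p > 0" "\<forall>q. shift1 M q > 0" "(4*\<beta>*Lc M*H) * h > 0"
    using hp shift_pos[OF M] \<beta> L H h by auto
  note R = S_memI[OF sm' bound pos2]
  show "fourier f \<in> S_space (hat_seq A) (shift1 M) ((4*\<beta>*Lc M*H) * h)" by (rule R(1))
  show "S_norm (hat_seq A) (shift1 M) ((4*\<beta>*Lc M*H) * h) (fourier f)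
           \<le> (\<gamma>*(4*pi+2*C0)*H) * h * S_norm M (hat_seq A) h f"
    using R(2) unfolding NF_def by (simp add: ac_simps)
qed

lemma inv_fourier_eq: "inv_fourier f = (\<lambda>\<xi>. complex_of_real (1 / (2 * pi)) * fourier f (- \<xi>))"
  unfolding inv_fourier_def by auto

lemma refl_in:
  assumes G: "G \<in> S_space N B h" and pos: "\<forall>p. N p > 0" "\<forall>q. B q > 0" "h > 0"
  shows "(\<lambda>\<xi>. complex_of_real c * G (- \<xi>)) \<in> S_space N B h"
    and "S_norm N B h (\<lambda>\<xi>. complex_of_real c * G (- \<xi>)) \<le> \<bar>c\<bar> * S_norm N B h G"
proof -
  have sG: "smooth_fun G" using G unfolding S_space_def by auto
  have b: "norm (complex_of_real (\<xi>^p) * vder (\<lambda>\<xi>. complex_of_real c * G (- \<xi>)) q \<xi>)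
      \<le> (\<bar>c\<bar> * S_norm N B h G) * (h^(p+q) * N p * B q)" for \<xi> p q
  proof -
    have "norm (complex_of_real (\<xi>^p) * vder (\<lambda>\<xi>. complex_of_real c * G (- \<xi>)) q \<xi>)
        = \<bar>c\<bar> * norm (complex_of_real ((- \<xi>)^p) * vder G q (- \<xi>))"
      unfolding vder_refl[OF sG] by (simp add: norm_mult norm_power)
    also have "\<dots> \<le> \<bar>c\<bar> * (S_norm N B h G * (h^(p+q) * N p * B q))"
    proof -
      have sb: "norm (complex_of_real ((- \<xi>)^p) * vder G q (- \<xi>)) \<le> S_norm N B h G * (h^(p+q) * N p * B q)"
        by (rule S_bound[OF G]) (use pos in auto)
      show ?thesis by (rule mult_left_mono[OF sb]) simp
    qed
    finally show ?thesis by (simp add: ac_simps)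
  qed
  note R = S_memI[OF smooth_refl[OF sG] b pos]
  show "(\<lambda>\<xi>. complex_of_real c * G (- \<xi>)) \<in> S_space N B h" by (rule R(1))
  show "S_norm N B h (\<lambda>\<xi>. complex_of_real c * G (- \<xi>)) \<le> \<bar>c\<bar> * S_norm N B h G" by (rule R(2))
qed

lemma S_norm_mono:
  assumes f: "f \<in> S_space N B h" and pos: "\<forall>p. N p > 0" "\<forall>q. B q > 0" "h > 0" and hh: "h \<le> h'"
  shows "S_norm N B h' f \<le> S_norm N B h f"
proof -
  have sf: "smooth_fun f" using f unfolding S_space_def by auto
  have "norm (complex_of_real (x^p) * vder f q x) \<le> S_norm N B h f * (h'^(p+q) * N p * B q)" for x p q
  proof -
    have "norm (complex_of_real (x^p) * vder f q x) \<le> S_norm N B h f * (h^(p+q) * N p * B q)"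
      using S_bound[OF f] pos by auto
    also have "\<dots> \<le> S_norm N B h f * (h'^(p+q) * N p * B q)"
      using pos hh S_norm_nonneg[OF f] by (intro mult_left_mono mult_right_mono power_mono) (simp_all add: less_imp_le)
    finally show ?thesis .
  qed
  then show ?thesis by (rule S_memI(2)[OF sf]) (use pos hh in auto)
qed

lemma generic:
  fixes T :: "(real \<Rightarrow> complex) \<Rightarrow> real \<Rightarrow> complex"
  assumes posX: "\<forall>p. NX p > 0" "\<forall>q. BX q > 0"
    and a: "a > 0" and K: "K > 0"
    and est: "\<And>h u. h \<ge> 1 \<Longrightarrow> u \<in> S_space NX BX h \<Longrightarrow>
               T u \<in> S_space NY BY (a*h) \<and> S_norm NY BY (a*h) (T u) \<le> K * h * S_norm NX BX h u"
    and add: "\<And>u v. u \<in> S_ind NX BX \<Longrightarrow> v \<in> S_ind NX BX \<Longrightarrow> T (\<lambda>x. u x + v x) = (\<lambda>x. T u x + T v x)"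
    and smul: "\<And>u c. u \<in> S_ind NX BX \<Longrightarrow> T (\<lambda>x. c * u x) = (\<lambda>x. c * T u x)"
    and diff: "\<And>u v. u \<in> S_ind NX BX \<Longrightarrow> v \<in> S_ind NX BX \<Longrightarrow> T (\<lambda>x. v x - u x) = (\<lambda>x. T v x - T u x)"
  shows "(\<exists>a>0. \<forall>h\<ge>1. T ` S_space NX BX h \<subseteq> S_space NY BY (a * h) \<and>
            continuous_map (S_top NX BX h) (S_top NY BY (a * h)) T)
       \<and> (T ` S_ind NX BX \<subseteq> S_ind NY BY \<and>
            continuous_map (S_ind_top NX BX) (S_ind_top NY BY) T)"
proof -
  have step: "continuous_map (S_top NX BX h) (S_top NY BY (a * max h 1)) T"
    and maps: "\<And>u. u \<in> S_space NX BX h \<Longrightarrow> T u \<in> S_space NY BY (a * max h 1)"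
    if h: "h > 0" for h
  proof -
    have mono: "u \<in> S_space NX BX (max h 1)" if "u \<in> S_space NX BX h" for u
      using S_space_mono[OF that posX h] by simp
    show maps: "\<And>u. u \<in> S_space NX BX h \<Longrightarrow> T u \<in> S_space NY BY (a * max h 1)"
      using est mono by auto
    show "continuous_map (S_top NX BX h) (S_top NY BY (a * max h 1)) T"
    proof (rule cont_step[OF posX h maps])
      show "T (\<lambda>x. v x - u x) = (\<lambda>x. T v x - T u x)" if "u \<in> S_space NX BX h" "v \<in> S_space NX BX h" for u v
        using diff that h unfolding S_ind_def by auto
      show "S_norm NY BY (a * max h 1) (T u) \<le> (K * max h 1) * S_norm NX BX h u" if u: "u \<in> S_space NX BX h" for u
      proof -
        have "S_norm NY BY (a * max h 1) (T u) \<le> K * max h 1 * S_norm NX BX (max h 1) u"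
          using est[OF _ mono[OF u]] by simp
        also have "\<dots> \<le> K * max h 1 * S_norm NX BX h u"
          using S_norm_mono[OF u posX h] K by (intro mult_left_mono) auto
        finally show ?thesis by simp
      qed
      show "K * max h 1 > 0" using K by simp
    qed
  qed
  have part1: "\<forall>h\<ge>1. T ` S_space NX BX h \<subseteq> S_space NY BY (a * h) \<and>
            continuous_map (S_top NX BX h) (S_top NY BY (a * h)) T"
  proof (intro allI impI conjI)
    fix h :: real assume h: "h \<ge> 1"
    then have hh: "max h 1 = h" "h > 0" by auto
    show "T ` S_space NX BX h \<subseteq> S_space NY BY (a * h)" using maps[OF hh(2)] hh by auto
    show "continuous_map (S_top NX BX h) (S_top NY BY (a * h)) T" using step[OF hh(2)] hh by simp
  qed
  have incl: "T ` S_ind NX BX \<subseteq> S_ind NY BY"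
  proof
    fix g assume "g \<in> T ` S_ind NX BX"
    then obtain u h where u: "g = T u" "h > 0" "u \<in> S_space NX BX h" unfolding S_ind_def by auto
    have "T u \<in> S_space NY BY (a * max h 1)" by (rule maps[OF u(2,3)])
    moreover have "a * max h 1 > 0" using a by simp
    ultimately show "g \<in> S_ind NY BY" unfolding S_ind_def using u(1) by auto
  qed
  have "continuous_map (S_ind_top NX BX) (S_ind_top NY BY) T"
  proof (rule cont_ind[OF _ add smul diff _ posX])
    show "T u \<in> S_ind NY BY" if "u \<in> S_ind NX BX" for u using incl that by auto
    show "\<exists>h'>0. continuous_map (S_top NX BX h) (S_top NY BY h') T" if "h > 0" for h
      using step[OF that] a by (intro exI[of _ "a * max h 1"]) auto
  qed
  then show ?thesis using part1 incl a by blast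
qed

theorem proposition2p8:
  fixes M A :: "nat \<Rightarrow> real"
  assumes M_weight: "weight_sequence M"
    and M_sm: "cond_sm M"
    and A_pos: "\<forall>p. A p > 0"
    and A_cond: "almost_increasing A \<or>
                 (liminf (\<lambda>p. ereal (root p (A p))) > 0 \<and> cond_alg (hat_seq A))"
  shows "(\<exists>a>0. \<forall>h\<ge>1.
            fourier ` S_space M (hat_seq A) h \<subseteq> S_space (hat_seq A) (shift1 M) (a * h) \<and>
            continuous_map (S_top M (hat_seq A) h) (S_top (hat_seq A) (shift1 M) (a * h)) fourier)
       \<and> (fourier ` S_ind M (hat_seq A) \<subseteq> S_ind (hat_seq A) (shift1 M) \<and>
            continuous_map (S_ind_top M (hat_seq A)) (S_ind_top (hat_seq A) (shift1 M)) fourier)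
       \<and> (\<exists>a>0. \<forall>h\<ge>1.
            inv_fourier ` S_space M (hat_seq A) h \<subseteq> S_space (hat_seq A) (shift1 M) (a * h) \<and>
            continuous_map (S_top M (hat_seq A) h) (S_top (hat_seq A) (shift1 M) (a * h)) inv_fourier)
       \<and> (inv_fourier ` S_ind M (hat_seq A) \<subseteq> S_ind (hat_seq A) (shift1 M) \<and>
            continuous_map (S_ind_top M (hat_seq A)) (S_ind_top (hat_seq A) (shift1 M)) inv_fourier)"
proof -
  obtain C0 H where C0: "C0 > 0" and H1: "H > 1"
    and sm: "\<And>p. ln (quot_seq M (p + 1) / quot_seq M p) \<le> C0 * H ^ (p + 1)"
    using M_sm unfolding cond_sm_def by blast
  have H: "H \<ge> 1" using H1 by simp
  obtain \<gamma> \<beta> where \<gamma>: "\<gamma> > 0" and \<beta>: "\<beta> \<ge> 1" and Ash: "\<And>p j. j \<le> p \<Longrightarrow> A (p - j) \<le> \<gamma> * \<beta>^p * A p"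
    using A_shift[OF A_pos A_cond] by blast
  have Mp: "\<forall>p. M p > 0" using ws_pos[OF M_weight] by auto
  have hp: "\<forall>q. hat_seq A q > 0" by (rule hat_pos[OF A_pos])
  have sp: "\<forall>q. shift1 M q > 0" by (rule shift_pos[OF M_weight])
  define a where "a = 4*\<beta>*Lc M*H"
  define K where "K = \<gamma>*(4*pi+2*C0)*H"
  have a0: "a > 0" unfolding a_def using \<beta> H Lc_ge1[of M] by simp
  have K0: "K > 0" unfolding K_def using \<gamma> C0 H by (simp add: add_pos_pos)
  have intg: "integrable lborel u" if uu: "u \<in> S_ind M (hat_seq A)" for u
  proof -
    obtain h where h: "h > 0" "u \<in> S_space M (hat_seq A) h" using uu unfolding S_ind_iff by auto
    show ?thesis using Gf_int(1)[OF h(2) M_weight hp h(1) sm, of 0 0] by (simp add: Gf_00)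
  qed
  have estF: "fourier u \<in> S_space (hat_seq A) (shift1 M) (a*h) \<and>
      S_norm (hat_seq A) (shift1 M) (a*h) (fourier u) \<le> K * h * S_norm M (hat_seq A) h u"
    if "h \<ge> 1" "u \<in> S_space M (hat_seq A) h" for h u
    using fourier_in[OF M_weight A_pos C0 H sm \<gamma> \<beta> Ash that(2) that(1)] unfolding a_def K_def by simp
  have GF: "(\<exists>a>0. \<forall>h\<ge>1. fourier ` S_space M (hat_seq A) h \<subseteq> S_space (hat_seq A) (shift1 M) (a * h) \<and>
            continuous_map (S_top M (hat_seq A) h) (S_top (hat_seq A) (shift1 M) (a * h)) fourier)
       \<and> (fourier ` S_ind M (hat_seq A) \<subseteq> S_ind (hat_seq A) (shift1 M) \<and>
            continuous_map (S_ind_top M (hat_seq A)) (S_ind_top (hat_seq A) (shift1 M)) fourier)"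
  proof (rule generic[OF Mp hp a0 K0 estF])
    show "fourier (\<lambda>x. u x + v x) = (\<lambda>x. fourier u x + fourier v x)"
      if "u \<in> S_ind M (hat_seq A)" "v \<in> S_ind M (hat_seq A)" for u v
      using fourier_add[OF intg[OF that(1)] intg[OF that(2)]] by auto
    show "fourier (\<lambda>x. c * u x) = (\<lambda>x. c * fourier u x)" for u c
      using fourier_cmult by auto
    show "fourier (\<lambda>x. v x - u x) = (\<lambda>x. fourier v x - fourier u x)"
      if "u \<in> S_ind M (hat_seq A)" "v \<in> S_ind M (hat_seq A)" for u v
      using fourier_diff[OF intg[OF that(2)] intg[OF that(1)]] by auto
  qed auto
  define K' where "K' = K / (2*pi)"
  have K'0: "K' > 0" unfolding K'_def using K0 by simp
  have estI: "inv_fourier u \<in> S_space (hat_seq A) (shift1 M) (a*h) \<and>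
      S_norm (hat_seq A) (shift1 M) (a*h) (inv_fourier u) \<le> K' * h * S_norm M (hat_seq A) h u"
    if h: "h \<ge> 1" "u \<in> S_space M (hat_seq A) h" for h u
  proof -
    have ah: "a * h > 0" using a0 h by simp
    note E = estF[OF h]
    note R = refl_in[OF conjunct1[OF E] hp sp ah, of "1 / (2 * pi)"]
    show ?thesis
    proof
      show "inv_fourier u \<in> S_space (hat_seq A) (shift1 M) (a*h)" unfolding inv_fourier_eq by (rule R(1))
      have "S_norm (hat_seq A) (shift1 M) (a*h) (inv_fourier u) \<le> \<bar>1 / (2 * pi)\<bar> * S_norm (hat_seq A) (shift1 M) (a*h) (fourier u)"
        unfolding inv_fourier_eq by (rule R(2))
      also have "\<dots> \<le> \<bar>1 / (2 * pi)\<bar> * (K * h * S_norm M (hat_seq A) h u)"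
        using conjunct2[OF E] by (intro mult_left_mono) auto
      also have "\<dots> = K' * h * S_norm M (hat_seq A) h u" unfolding K'_def by simp
      finally show "S_norm (hat_seq A) (shift1 M) (a*h) (inv_fourier u) \<le> K' * h * S_norm M (hat_seq A) h u" .
    qed
  qed
  have GI: "(\<exists>a>0. \<forall>h\<ge>1. inv_fourier ` S_space M (hat_seq A) h \<subseteq> S_space (hat_seq A) (shift1 M) (a * h) \<and>
            continuous_map (S_top M (hat_seq A) h) (S_top (hat_seq A) (shift1 M) (a * h)) inv_fourier)
       \<and> (inv_fourier ` S_ind M (hat_seq A) \<subseteq> S_ind (hat_seq A) (shift1 M) \<and>
            continuous_map (S_ind_top M (hat_seq A)) (S_ind_top (hat_seq A) (shift1 M)) inv_fourier)"
  proof (rule generic[OF Mp hp a0 K'0 estI])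
    show "inv_fourier (\<lambda>x. u x + v x) = (\<lambda>x. inv_fourier u x + inv_fourier v x)"
      if "u \<in> S_ind M (hat_seq A)" "v \<in> S_ind M (hat_seq A)" for u v
      unfolding inv_fourier_eq using fourier_add[OF intg[OF that(1)] intg[OF that(2)]] by (auto simp: algebra_simps)
    show "inv_fourier (\<lambda>x. c * u x) = (\<lambda>x. c * inv_fourier u x)" for u c
      unfolding inv_fourier_eq using fourier_cmult by (auto simp: algebra_simps)
    show "inv_fourier (\<lambda>x. v x - u x) = (\<lambda>x. inv_fourier v x - inv_fourier u x)"
      if "u \<in> S_ind M (hat_seq A)" "v \<in> S_ind M (hat_seq A)" for u v
    proof -
      have e: "fourier (\<lambda>x. v x - u x) = (\<lambda>\<xi>. fourier v \<xi> - fourier u \<xi>)"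
        using fourier_diff[OF intg[OF that(2)] intg[OF that(1)]] by auto
      show ?thesis unfolding inv_fourier_eq e by (auto simp: algebra_simps)
    qed
  qed auto
  show ?thesis using GF GI by blast
qed

end
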